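(* Let $n\ge2$, let $Gr_n$ be the grid graph on $\{0,\dots,2^n\}^2$ with edges between vertices at $\ell_1$-distance $1$, directed edge set $E(Gr_n)=\{uv:v\in\{u+(1,0),u+(0,1)\}\}$, and the $\ell_1$-metric; let $th(uv)=1/|E(Gr_n)|$ for all $uv\in E(Gr_n)$. Let $T=\bigcup_{k=0}^{n-2}T_k$, $T_k=\{1,2,3,4\}^k$, $|t|=k$ for $t\in T_k$. Let $C_2,C_4\in[\tfrac12,\infty)$ and let $\{\mu_t\}_{t\in T}$ be signed measures on $V(Gr_n)$ of total mass $0$ such that for all $t\in T$: (P2) $\mathrm{dist}(\mathrm{supp}(\mu_t),\mathrm{supp}(\mu_{t'}))\ge C_2^{-1}2^{n-\max(|t|,|t'|)}$ for every $t'\in T\setminus\{t\}$; (P4) $|\mu_t(A)|\le C_4\min\{2^{-n-1-|t|},4^{-n}(\mathrm{diam}(A)+1)\}$ for every $A\subseteq V(Gr_n)$; (P5) there is $u\in V(Gr_n)$ such that $\mathrm{supp}(\mu_t)\cup\{u\}$ induces a connected subgraph. Then for all $f:V(Gr_n)\to\mathbb{R}$, $$\sum_{k=0}^{n-2}\Big(\sum_{t\in T_k}\Big|\int f\,d\mu_t\Big|^2\Big)^{1/2}\le C\sum_{uv\in E(Gr_n)}|f(u)-f(v)|\,th(uv),$$ where $C\le C_4(20+40C_2)$.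
   Context: $\mathrm{supp}(\mu)=\{v:\mu(\{v\})\ne0\}$; diam and dist use the $\ell_1$-metric. *)

theory Defs
  imports Complex_Main "HOL-Library.Extended_Real"
begin

type_synonym vtx = "int \<times> int"

definition grid_V :: "nat \<Rightarrow> vtx set" where
  "grid_V n = {0..2^n} \<times> {0..2^n}"

definition grid_E :: "nat \<Rightarrow> (vtx \<times> vtx) set" where
  "grid_E n = {(u, v). u \<in> grid_V n \<and> v \<in> grid_V n \<and>
      (v = (fst u + 1, snd u) \<or> v = (fst u, snd u + 1))}"

definition l1dist :: "vtx \<Rightarrow> vtx \<Rightarrow> real" where
  "l1dist u v = real_of_int (\<bar>fst u - fst v\<bar> + \<bar>snd u - snd v\<bar>)"

definition l1diam :: "vtx set \<Rightarrow> real" where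
  "l1diam A = (if A = {} then 0 else Max {l1dist u v | u v. u \<in> A \<and> v \<in> A})"

text \<open>Distance (l1) between two vertex sets, as an infimum in the extended reals
  (infinite if one of the sets is empty).\<close>
definition l1setdist :: "vtx set \<Rightarrow> vtx set \<Rightarrow> ereal" where
  "l1setdist A B = (INF p \<in> A \<times> B. ereal (l1dist (fst p) (snd p)))"

text \<open>A signed measure on V(Gr_n) is given by its point masses m : vtx => real;
  mass of A is the sum over A.\<close>
definition smeasure :: "(vtx \<Rightarrow> real) \<Rightarrow> vtx set \<Rightarrow> real" where
  "smeasure m A = (\<Sum>v\<in>A. m v)"

definition supp :: "nat \<Rightarrow> (vtx \<Rightarrow> real) \<Rightarrow> vtx set" where
  "supp n m = {v \<in> grid_V n. m v \<noteq> 0}"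

definition integral_m :: "nat \<Rightarrow> (vtx \<Rightarrow> real) \<Rightarrow> (vtx \<Rightarrow> real) \<Rightarrow> real" where
  "integral_m n f m = (\<Sum>v\<in>grid_V n. f v * m v)"

definition induces_connected :: "vtx set \<Rightarrow> bool" where
  "induces_connected S \<longleftrightarrow>
     (\<forall>x\<in>S. \<forall>y\<in>S. (x, y) \<in> {(a, b). a \<in> S \<and> b \<in> S \<and> l1dist a b = 1}\<^sup>*)"

text \<open>T_k = {1,2,3,4}^k as lists of length k; |t| = length t.\<close>
definition Tk :: "nat \<Rightarrow> nat list set" where
  "Tk k = {t. length t = k \<and> set t \<subseteq> {1,2,3,4}}"

definition Tall :: "nat \<Rightarrow> nat list set" where
  "Tall n = (\<Union>k\<in>{0..n-2}. Tk k)"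

end

theory Submission
  imports Defs "HOL-Analysis.L2_Norm"
begin
definition bd :: "nat \<Rightarrow> vtx set \<Rightarrow> (vtx \<times> vtx) set" where
  "bd n A = {e \<in> grid_E n. (fst e \<in> A) \<noteq> (snd e \<in> A)}"

lemma l1dist_sym: "l1dist u v = l1dist v u"
  unfolding l1dist_def by (simp add: abs_minus_commute)

lemma l1dist_eq1: "l1dist u v = 1 \<longleftrightarrow> \<bar>fst u - fst v\<bar> + \<bar>snd u - snd v\<bar> = 1"
  unfolding l1dist_def by linarith

lemma l1dist_ge0: "l1dist u v \<ge> 0"
  unfolding l1dist_def by simp

lemma grid_V_iff: "(x, y) \<in> grid_V n \<longleftrightarrow> 0 \<le> x \<and> x \<le> 2^n \<and> 0 \<le> y \<and> y \<le> 2^n"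
  unfolding grid_V_def by auto

lemma finite_V: "finite (grid_V n)"
  unfolding grid_V_def by simp

lemma E_sub: "grid_E n \<subseteq> grid_V n \<times> grid_V n"
  unfolding grid_E_def by auto

lemma finite_E: "finite (grid_E n)"
  using finite_subset[OF E_sub] finite_V by blast

lemma finite_bd: "finite (bd n A)"
  unfolding bd_def using finite_E by simp

lemma bd_compl: "bd n (grid_V n - A) = bd n A"
  unfolding bd_def using E_sub by fastforce

lemma E_adj: "e \<in> grid_E n \<Longrightarrow> l1dist (fst e) (snd e) = 1"
  unfolding grid_E_def l1dist_eq1 by auto

lemma adj_cases: fixes a b c d :: int assumes "\<bar>a - c\<bar> + \<bar>b - d\<bar> = 1"
  shows  "(c = a + 1 \<and> d = b) \<or> (c = a \<and> d = b + 1) \<or> (a = c + 1 \<and> b = d) \<or> (a = c \<and> b = d + 1)"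
  using assms by (auto simp: abs_if split: if_split_asm)

lemma adj_E: assumes "u \<in> grid_V n" "v \<in> grid_V n" "l1dist u v = 1"
  shows "(u, v) \<in> grid_E n \<or> (v, u) \<in> grid_E n"
proof -
  obtain a b c d where u: "u = (a,b)" and v: "v = (c,d)" by (cases u, cases v)
  have "\<bar>a - c\<bar> + \<bar>b - d\<bar> = 1" using assms(3) u v l1dist_eq1 by simp
  hence "(c = a + 1 \<and> d = b) \<or> (c = a \<and> d = b + 1) \<or> (a = c + 1 \<and> b = d) \<or> (a = c \<and> b = d + 1)"
    by (rule adj_cases)
  thus ?thesis using assms(1,2) u v unfolding grid_E_def by auto
qed

lemma adj_bd: assumes "u \<in> grid_V n" "v \<in> grid_V n" "l1dist u v = 1" "(u \<in> A) \<noteq> (v \<in> A)"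
  shows "(u, v) \<in> bd n A \<or> (v, u) \<in> bd n A"
  using adj_E[OF assms(1-3)] assms(4) unfolding bd_def by auto

lemma int_ivt:
  fixes P :: "int \<Rightarrow> bool"
  assumes "a \<le> c" "P a \<noteq> P c"
  shows "\<exists>x. a \<le> x \<and> x < c \<and> P x \<noteq> P (x + 1)"
proof (rule ccontr)
  assume H: "\<not> ?thesis"
  have H': "P x = P (x + 1)" if "a \<le> x" "x < c" for x
    using H that by blast
  have "a + int k \<le> c \<longrightarrow> P (a + int k) = P a" for k
  proof (induction k)
    case 0 show ?case by simp
  next
    case (Suc k)
    show ?case
    proof
      assume "a + int (Suc k) \<le> c"
      hence "a + int k \<le> c" "a + int k < c" by auto
      hence "P (a + int k) = P a" "P (a + int k) = P (a + int k + 1)" using Suc.IH H'[of "a + int k"] by auto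
      moreover have "a + int (Suc k) = a + int k + 1" by simp
      ultimately show "P (a + int (Suc k)) = P a" by metis
    qed
  qed
  from this[of "nat (c - a)"] have "P c = P a" using assms(1) by simp
  thus False using assms(2) by simp
qed

lemma int_ivt2:
  fixes P :: "int \<Rightarrow> bool"
  assumes "P a \<noteq> P c"
  shows "\<exists>x. min a c \<le> x \<and> x < max a c \<and> P x \<noteq> P (x + 1)"
proof (cases "a \<le> c")
  case True thus ?thesis using int_ivt[OF True assms] by auto
next
  case False
  hence "c \<le> a" by simp
  from int_ivt[OF this, of P] assms obtain x where "c \<le> x \<and> x < a \<and> P x \<noteq> P (x + 1)" by auto
  thus ?thesis using False by auto
qed

lemma row_edge:
  assumes "(a, y) \<in> grid_V n" "(c, y) \<in> grid_V n" "((a,y) \<in> A) \<noteq> ((c,y) \<in> A)"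
  shows "\<exists>x. min a c \<le> x \<and> x < max a c \<and> ((x,y),(x+1,y)) \<in> bd n A"
proof -
  from int_ivt2[of "\<lambda>x. (x,y) \<in> A" a c] assms(3) obtain x where
    x: "min a c \<le> x" "x < max a c" "((x,y) \<in> A) \<noteq> ((x+1,y) \<in> A)" by auto
  have "(x,y) \<in> grid_V n" "(x+1,y) \<in> grid_V n" using assms(1,2) x(1,2) unfolding grid_V_iff by auto
  hence "((x,y),(x+1,y)) \<in> bd n A" using x(3) unfolding bd_def grid_E_def by auto
  thus ?thesis using x by auto
qed

lemma col_edge:
  assumes "(x, a) \<in> grid_V n" "(x, c) \<in> grid_V n" "((x,a) \<in> A) \<noteq> ((x,c) \<in> A)"
  shows "\<exists>y. min a c \<le> y \<and> y < max a c \<and> ((x,y),(x,y+1)) \<in> bd n A"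
proof -
  from int_ivt2[of "\<lambda>y. (x,y) \<in> A" a c] assms(3) obtain y where
    y: "min a c \<le> y" "y < max a c" "((x,y) \<in> A) \<noteq> ((x,y+1) \<in> A)" by auto
  have "(x,y) \<in> grid_V n" "(x,y+1) \<in> grid_V n" using assms(1,2) y(1,2) unfolding grid_V_iff by auto
  hence "((x,y),(x,y+1)) \<in> bd n A" using y(3) unfolding bd_def grid_E_def by auto
  thus ?thesis using y by auto
qed

lemma bd_nonempty:
  assumes "x \<in> A" "y \<in> grid_V n" "y \<notin> A" "A \<subseteq> grid_V n"
  shows "bd n A \<noteq> {}"
proof -
  obtain a b where x: "x = (a,b)" by (cases x)
  obtain c d where y: "y = (c,d)" by (cases y)
  have xv: "(a,b) \<in> grid_V n" using assms x by auto
  have zv: "(c,b) \<in> grid_V n" using xv assms(2) unfolding y grid_V_iff by auto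
  show ?thesis
  proof (cases "(c,b) \<in> A")
    case True
    have "(c,d) \<in> grid_V n" "(c,d) \<notin> A" using assms(2,3) y by auto
    then obtain y' where "((c,y'),(c,y'+1)) \<in> bd n A" using col_edge[OF zv, of d A] True by blast
    thus ?thesis by blast
  next
    case False
    have "(a,b) \<in> A" using assms(1) x by simp
    then obtain x' where "((x',b),(x'+1,b)) \<in> bd n A" using row_edge[OF xv zv, of A] False by blast
    thus ?thesis by blast
  qed
qed

lemma crossing:
  assumes "induces_connected S" "x \<in> S" "y \<in> S" "P x" "\<not> P y"
  shows "\<exists>w w'. w \<in> S \<and> w' \<in> S \<and> l1dist w w' = 1 \<and> P w \<and> \<not> P w'"
proof -
  let ?R = "{(a, b). a \<in> S \<and> b \<in> S \<and> l1dist a b = 1}"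
  have "(x, y) \<in> ?R\<^sup>*" using assms(1-3) unfolding induces_connected_def by blast
  thus ?thesis using assms(5)
  proof (induction rule: rtrancl_induct)
    case base thus ?case using assms(4) by simp
  next
    case (step z y)
    show ?case
    proof (cases "P z")
      case True thus ?thesis using step by blast
    next
      case False thus ?thesis using step.IH by simp
    qed
  qed
qed

lemma split_disconnected:
  assumes "\<not> induces_connected A"
  shows "\<exists>A1 A2. A1 \<noteq> {} \<and> A2 \<noteq> {} \<and> A1 \<inter> A2 = {} \<and> A = A1 \<union> A2 \<and>
     (\<forall>x\<in>A1. \<forall>y\<in>A2. l1dist x y \<noteq> 1)"
proof -
  let ?R = "{(a, b). a \<in> A \<and> b \<in> A \<and> l1dist a b = 1}"
  obtain x y where xy: "x \<in> A" "y \<in> A" "(x, y) \<notin> ?R\<^sup>*"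
    using assms unfolding induces_connected_def by blast
  define A1 where "A1 = {z \<in> A. (x, z) \<in> ?R\<^sup>*}"
  define A2 where "A2 = A - A1"
  have "x \<in> A1" using xy unfolding A1_def by simp
  moreover have "y \<in> A2" using xy unfolding A1_def A2_def by simp
  moreover have "\<forall>a\<in>A1. \<forall>b\<in>A2. l1dist a b \<noteq> 1"
  proof (intro ballI notI)
    fix a b assume "a \<in> A1" "b \<in> A2" "l1dist a b = 1"
    hence "(x, b) \<in> ?R\<^sup>*" unfolding A1_def A2_def
      by (auto intro: rtrancl_into_rtrancl)
    thus False using \<open>b \<in> A2\<close> unfolding A1_def A2_def by auto
  qed
  moreover have "A1 \<inter> A2 = {}" "A = A1 \<union> A2" unfolding A1_def A2_def by auto
  ultimately show ?thesis by blast
qed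

lemma bd_split:
  assumes "A = A1 \<union> A2" "A1 \<inter> A2 = {}" "\<forall>x\<in>A1. \<forall>y\<in>A2. l1dist x y \<noteq> 1"
  shows "bd n A = bd n A1 \<union> bd n A2" "bd n A1 \<inter> bd n A2 = {}"
proof -
  have adj: "l1dist (fst e) (snd e) = 1" "l1dist (snd e) (fst e) = 1" if "e \<in> grid_E n" for e
    using E_adj[OF that] l1dist_sym by auto
  show "bd n A = bd n A1 \<union> bd n A2"
    unfolding bd_def using assms adj by blast
  show "bd n A1 \<inter> bd n A2 = {}"
    unfolding bd_def using assms adj by blast
qed

lemma finite_l1set: "finite X \<Longrightarrow> finite {l1dist u v |u v. u \<in> X \<and> v \<in> X}"
proof -
  assume "finite X"
  have "{l1dist u v |u v. u \<in> X \<and> v \<in> X} = (\<lambda>(u,v). l1dist u v) ` (X \<times> X)" by auto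
  thus ?thesis using \<open>finite X\<close> by simp
qed

lemma l1diam_le:
  assumes "finite X" "\<And>u v. u \<in> X \<Longrightarrow> v \<in> X \<Longrightarrow> l1dist u v \<le> c" "c \<ge> 0"
  shows "l1diam X \<le> c"
proof (cases "X = {}")
  case True thus ?thesis using assms(3) unfolding l1diam_def by simp
next
  case False
  have ne: "{l1dist u v |u v. u \<in> X \<and> v \<in> X} \<noteq> {}" using False by blast
  have "Max {l1dist u v |u v. u \<in> X \<and> v \<in> X} \<le> c"
    using Max_le_iff[OF finite_l1set[OF assms(1)] ne] assms(2) by blast
  thus ?thesis using False unfolding l1diam_def by simp
qed

lemma l1diam_ge:
  assumes "finite X" "u \<in> X" "v \<in> X"
  shows "l1dist u v \<le> l1diam X"
proof -
  have "l1dist u v \<in> {l1dist u v |u v. u \<in> X \<and> v \<in> X}" using assms by blast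
  hence "l1dist u v \<le> Max {l1dist u v |u v. u \<in> X \<and> v \<in> X}"
    using Max_ge[OF finite_l1set[OF assms(1)]] by blast
  thus ?thesis using assms unfolding l1diam_def by auto
qed

lemma l1diam_nonneg: "l1diam X \<ge> 0 \<or> \<not> finite X"
proof (cases "X = {} \<or> \<not> finite X")
  case True thus ?thesis unfolding l1diam_def by auto
next
  case False
  then obtain u where "u \<in> X" by auto
  hence "l1dist u u \<le> l1diam X" using l1diam_ge False by blast
  thus ?thesis by (simp add: l1dist_def)
qed

lemma l1diam_V: "X \<subseteq> grid_V n \<Longrightarrow> l1diam X \<le> 2 * 2^n"
proof -
  assume X: "X \<subseteq> grid_V n"
  have "finite X" using X finite_subset finite_V by blast
  moreover have "l1dist u v \<le> 2 * 2^n" if "u \<in> X" "v \<in> X" for u v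
  proof -
    obtain a b where u: "u = (a,b)" by (cases u)
    obtain c d where v: "v = (c,d)" by (cases v)
    have "(a,b) \<in> grid_V n" "(c,d) \<in> grid_V n" using X that u v by auto
    hence "0 \<le> a" "a \<le> 2^n" "0 \<le> b" "b \<le> 2^n" "0 \<le> c" "c \<le> 2^n" "0 \<le> d" "d \<le> 2^n"
      unfolding grid_V_iff by auto
    hence "\<bar>a - c\<bar> + \<bar>b - d\<bar> \<le> 2 * 2^n" by linarith
    hence "real_of_int (\<bar>a - c\<bar> + \<bar>b - d\<bar>) \<le> 2 * 2^n" by (metis of_int_le_iff of_int_mult of_int_numeral of_int_power)
    thus ?thesis unfolding l1dist_def u v by simp
  qed
  ultimately show ?thesis by (intro l1diam_le) auto
qed

lemma between_row:
  assumes "induces_connected X" "a \<in> X" "c \<in> X" "snd a \<le> y" "y \<le> snd c"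
  shows "\<exists>w\<in>X. snd w = y"
proof (cases "snd a = y")
  case True thus ?thesis using assms by blast
next
  case False
  hence "snd a < y" using assms by simp
  from crossing[OF assms(1,2,3), of "\<lambda>v. snd v < y"] this assms(5)
  obtain w w' where ww: "w \<in> X" "w' \<in> X" "l1dist w w' = 1" "snd w < y" "\<not> snd w' < y" by auto
  have "\<bar>fst w - fst w'\<bar> + \<bar>snd w - snd w'\<bar> = 1" using ww(3) l1dist_eq1 by simp
  hence "snd w' = y" using ww(4,5) by linarith
  thus ?thesis using ww(2) by blast
qed

lemma between_col:
  assumes "induces_connected X" "a \<in> X" "c \<in> X" "fst a \<le> x" "x \<le> fst c"
  shows "\<exists>w\<in>X. fst w = x"
proof (cases "fst a = x")
  case True thus ?thesis using assms by blast
next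
  case False
  hence "fst a < x" using assms by simp
  from crossing[OF assms(1,2,3), of "\<lambda>v. fst v < x"] this assms(5)
  obtain w w' where ww: "w \<in> X" "w' \<in> X" "l1dist w w' = 1" "fst w < x" "\<not> fst w' < x" by auto
  have "\<bar>fst w - fst w'\<bar> + \<bar>snd w - snd w'\<bar> = 1" using ww(3) l1dist_eq1 by simp
  hence "fst w' = x" using ww(4,5) by linarith
  thus ?thesis using ww(2) by blast
qed

definition hr :: "nat \<Rightarrow> vtx set \<Rightarrow> int \<Rightarrow> bool" where
  "hr n A y \<longleftrightarrow> (\<exists>x. ((x,y),(x+1,y)) \<in> bd n A)"
definition vc :: "nat \<Rightarrow> vtx set \<Rightarrow> int \<Rightarrow> bool" where
  "vc n A x \<longleftrightarrow> (\<exists>y. ((x,y),(x,y+1)) \<in> bd n A)"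

lemma count_hv:
  "card {y\<in>{0..2^n}. hr n A y} + card {x\<in>{0..2^n}. vc n A x} \<le> card (bd n A)"
proof -
  let ?H = "{e\<in>bd n A. snd (fst e) = snd (snd e)}"
  let ?W = "{e\<in>bd n A. snd (fst e) \<noteq> snd (snd e)}"
  have fH: "finite ?H" "finite ?W" using finite_bd by auto
  have "{y\<in>{0..2^n}. hr n A y} \<subseteq> (\<lambda>e. snd (fst e)) ` ?H"
    unfolding hr_def by force
  hence "card {y\<in>{0..2^n}. hr n A y} \<le> card ((\<lambda>e. snd (fst e)) ` ?H)"
    by (rule card_mono[rotated]) (use fH in auto)
  also have "\<dots> \<le> card ?H" by (rule card_image_le) (use fH in auto)
  finally have c1: "card {y\<in>{0..2^n}. hr n A y} \<le> card ?H" .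
  have "{x\<in>{0..2^n}. vc n A x} \<subseteq> (\<lambda>e. fst (fst e)) ` ?W"
    unfolding vc_def by force
  hence "card {x\<in>{0..2^n}. vc n A x} \<le> card ((\<lambda>e. fst (fst e)) ` ?W)"
    by (rule card_mono[rotated]) (use fH in auto)
  also have "\<dots> \<le> card ?W" by (rule card_image_le) (use fH in auto)
  finally have c2: "card {x\<in>{0..2^n}. vc n A x} \<le> card ?W" .
  have "card ?H + card ?W = card (?H \<union> ?W)"
    by (rule card_Un_disjoint[symmetric]) (use fH in auto)
  also have "?H \<union> ?W = bd n A" by auto
  finally show ?thesis using c1 c2 by linarith
qed

lemma pure_row:
  assumes "\<not> hr n A y" "(x,y) \<in> grid_V n" "(x',y) \<in> grid_V n"
  shows "((x,y) \<in> A) = ((x',y) \<in> A)"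
  using row_edge[OF assms(2,3), of A] assms(1) unfolding hr_def by blast

lemma pure_col:
  assumes "\<not> vc n A x" "(x,y) \<in> grid_V n" "(x,y') \<in> grid_V n"
  shows "((x,y) \<in> A) = ((x,y') \<in> A)"
  using col_edge[OF assms(2,3), of A] assms(1) unfolding vc_def by blast

lemma global_one:
  assumes X: "X \<subseteq> grid_V n" "induces_connected X"
    and y0: "y0 \<in> {0..2^n}" "\<not> hr n X y0" and x0: "x0 \<in> {0..2^n}" "\<not> vc n X x0"
    and notin: "(x0, y0) \<notin> X"
  shows "l1diam X \<le> card (bd n X)"
proof -
  let ?R = "{y\<in>{0..2^n}. hr n X y}" and ?C = "{x\<in>{0..2^n}. vc n X x}"
  have colx0: "(x0, y) \<notin> X" if "y \<in> {0..2^n}" for y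
  proof -
    have "(x0,y) \<in> grid_V n" "(x0,y0) \<in> grid_V n" using that x0 y0 unfolding grid_V_iff by auto
    thus ?thesis using pure_col[OF x0(2)] notin by blast
  qed
  have rowy0: "(x, y0) \<notin> X" if "x \<in> {0..2^n}" for x
  proof -
    have "(x,y0) \<in> grid_V n" "(x0,y0) \<in> grid_V n" using that x0 y0 unfolding grid_V_iff by auto
    thus ?thesis using pure_row[OF y0(2)] notin by blast
  qed
  have rows: "{min (snd a) (snd c) .. max (snd a) (snd c)} \<subseteq> ?R" if "a \<in> X" "c \<in> X" for a c
  proof
    fix y assume y: "y \<in> {min (snd a) (snd c) .. max (snd a) (snd c)}"
    have "\<exists>w\<in>X. snd w = y"
    proof (cases "snd a \<le> snd c")
      case True thus ?thesis using between_row[OF X(2) that] y by auto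
    next
      case False thus ?thesis using between_row[OF X(2) that(2,1)] y by auto
    qed
    then obtain w where w: "w \<in> X" "snd w = y" by blast
    have wv: "w \<in> grid_V n" using w X by auto
    obtain w1 where w1: "w = (w1, y)" using w by (cases w) auto
    have yr: "y \<in> {0..2^n}" using wv unfolding w1 grid_V_iff by auto
    have "(x0, y) \<in> grid_V n" using x0 yr unfolding grid_V_iff by auto
    from row_edge[OF _ this, of w1 X] wv w1 w(1) colx0[OF yr]
    have "hr n X y" unfolding hr_def by blast
    thus "y \<in> ?R" using yr by simp
  qed
  have cols: "{min (fst a) (fst c) .. max (fst a) (fst c)} \<subseteq> ?C" if "a \<in> X" "c \<in> X" for a c
  proof
    fix x assume x: "x \<in> {min (fst a) (fst c) .. max (fst a) (fst c)}"
    have "\<exists>w\<in>X. fst w = x"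
    proof (cases "fst a \<le> fst c")
      case True thus ?thesis using between_col[OF X(2) that] x by auto
    next
      case False thus ?thesis using between_col[OF X(2) that(2,1)] x by auto
    qed
    then obtain w where w: "w \<in> X" "fst w = x" by blast
    have wv: "w \<in> grid_V n" using w X by auto
    obtain w2 where w2: "w = (x, w2)" using w by (cases w) auto
    have xr: "x \<in> {0..2^n}" using wv unfolding w2 grid_V_iff by auto
    have "(x, y0) \<in> grid_V n" using y0 xr unfolding grid_V_iff by auto
    from col_edge[OF _ this, of w2 X] wv w2 w(1) rowy0[OF xr]
    have "vc n X x" unfolding vc_def by blast
    thus "x \<in> ?C" using xr by simp
  qed
  have fin: "finite ?R" "finite ?C" by (rule finite_subset[of _ "{0..2^n}"], auto)+
  have "l1dist a c \<le> card (bd n X)" if "a \<in> X" "c \<in> X" for a c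
  proof -
    have "card {min (snd a) (snd c) .. max (snd a) (snd c)} \<le> card ?R"
      using card_mono[OF fin(1) rows[OF that]] .
    moreover have "int (card {min (snd a) (snd c) .. max (snd a) (snd c)}) = \<bar>snd a - snd c\<bar> + 1"
      by (simp add: min_def max_def abs_if)
    ultimately have r: "\<bar>snd a - snd c\<bar> + 1 \<le> int (card ?R)" by linarith
    have "card {min (fst a) (fst c) .. max (fst a) (fst c)} \<le> card ?C"
      using card_mono[OF fin(2) cols[OF that]] .
    moreover have "int (card {min (fst a) (fst c) .. max (fst a) (fst c)}) = \<bar>fst a - fst c\<bar> + 1"
      by (simp add: min_def max_def abs_if)
    ultimately have c: "\<bar>fst a - fst c\<bar> + 1 \<le> int (card ?C)" by linarith
    have "int (card ?R) + int (card ?C) \<le> int (card (bd n X))" using count_hv[of n X] by linarith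
    hence "\<bar>fst a - fst c\<bar> + \<bar>snd a - snd c\<bar> \<le> int (card (bd n X))" using r c by linarith
    thus ?thesis unfolding l1dist_def by (metis of_int_le_iff of_int_of_nat_eq)
  qed
  moreover have "finite X" using X finite_subset finite_V by blast
  ultimately show ?thesis by (intro l1diam_le) auto
qed

lemma global_iso:
  assumes A: "A \<subseteq> grid_V n" "induces_connected A" "induces_connected (grid_V n - A)"
    and b: "card (bd n A) \<le> 2^n"
  shows "l1diam A \<le> card (bd n A) \<or> l1diam (grid_V n - A) \<le> card (bd n A)"
proof -
  have "card {y\<in>{0..(2::int)^n}. hr n A y} \<le> 2^n" using count_hv[of n A] b by linarith
  moreover have "card {0..(2::int)^n} = 2^n + 1" by (simp add: nat_add_distrib nat_power_eq)
  ultimately have "{y\<in>{0..(2::int)^n}. hr n A y} \<noteq> {0..2^n}" by (metis Suc_eq_plus1 not_less_eq_eq order_refl)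
  then obtain y0 where y0: "y0 \<in> {0..2^n}" "\<not> hr n A y0" by blast
  have "card {x\<in>{0..(2::int)^n}. vc n A x} \<le> 2^n" using count_hv[of n A] b by linarith
  hence "{x\<in>{0..(2::int)^n}. vc n A x} \<noteq> {0..2^n}" using \<open>card {0..(2::int)^n} = 2^n + 1\<close>
    by (metis Suc_eq_plus1 not_less_eq_eq order_refl)
  then obtain x0 where x0: "x0 \<in> {0..2^n}" "\<not> vc n A x0" by blast
  have hrc: "hr n (grid_V n - A) = hr n A" "vc n (grid_V n - A) = vc n A"
    unfolding hr_def vc_def bd_compl by auto
  show ?thesis
  proof (cases "(x0,y0) \<in> A")
    case False
    thus ?thesis using global_one[OF A(1,2) y0 x0] by simp
  next
    case True
    hence nin: "(x0,y0) \<notin> grid_V n - A" by simp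
    have "l1diam (grid_V n - A) \<le> card (bd n (grid_V n - A))"
      using global_one[of "grid_V n - A" n y0 x0] A(3) y0 x0 hrc nin by auto
    thus ?thesis unfolding bd_compl by simp
  qed
qed

definition box :: "vtx \<Rightarrow> int \<Rightarrow> vtx set" where
  "box p R = {v. \<bar>fst v - fst p\<bar> \<le> R \<and> \<bar>snd v - snd p\<bar> \<le> R}"

lemma local_iso:
  fixes p q :: vtx and r :: int
  assumes A: "A \<subseteq> grid_V n" "induces_connected A" "induces_connected (grid_V n - A)"
    and pq: "p \<in> grid_V n" "q \<in> grid_V n" "l1dist p q = 1" "(p \<in> A) \<noteq> (q \<in> A)"
    and r: "1 \<le> r" "4 * r < 2^n"
    and few: "card {e \<in> bd n A. fst e \<in> box p (2*r) \<and> snd e \<in> box p (2*r)} < nat r"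
  shows "A \<subseteq> box p (2*r) \<or> grid_V n - A \<subseteq> box p (2*r)"
proof -
  define N :: int where "N = 2^n"
  obtain p1 p2 where p: "p = (p1, p2)" by (cases p)
  obtain q1 q2 where q: "q = (q1, q2)" by (cases q)
  have pV: "0 \<le> p1" "p1 \<le> N" "0 \<le> p2" "p2 \<le> N" using pq(1) unfolding p N_def grid_V_iff by auto
  have qV: "0 \<le> q1" "q1 \<le> N" "0 \<le> q2" "q2 \<le> N" using pq(2) unfolding q N_def grid_V_iff by auto
  have pqd: "\<bar>p1 - q1\<bar> + \<bar>p2 - q2\<bar> = 1" using pq(3) unfolding p q l1dist_eq1 by simp
  have rN: "4 * r < N" using r N_def by simp
  define lo1 where "lo1 = max 0 (p1 - 2*r)"
  define hi1 where "hi1 = min N (p1 + 2*r)"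
  define lo2 where "lo2 = max 0 (p2 - 2*r)"
  define hi2 where "hi2 = min N (p2 + 2*r)"
  define EB where "EB = {e \<in> bd n A. fst e \<in> box p (2*r) \<and> snd e \<in> box p (2*r)}"
  have finEB: "finite EB" unfolding EB_def using finite_bd by simp
  define hseg where "hseg y \<longleftrightarrow> (\<exists>x. lo1 \<le> x \<and> x + 1 \<le> hi1 \<and> ((x,y),(x+1,y)) \<in> bd n A)" for y
  define vseg where "vseg x \<longleftrightarrow> (\<exists>y. lo2 \<le> y \<and> y + 1 \<le> hi2 \<and> ((x,y),(x,y+1)) \<in> bd n A)" for x
  have bandh: "\<exists>y\<in>Y0. \<not> hseg y" if "Y0 \<subseteq> {p2 - 2*r .. p2 + 2*r}" "card Y0 = nat r" for Y0
  proof (rule ccontr)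
    assume "\<not> (\<exists>y\<in>Y0. \<not> hseg y)"
    hence H: "hseg y" if "y \<in> Y0" for y using that by blast
    have "Y0 \<subseteq> (\<lambda>e. snd (fst e)) ` EB"
    proof
      fix y assume y: "y \<in> Y0"
      then obtain x where x: "lo1 \<le> x" "x + 1 \<le> hi1" "((x,y),(x+1,y)) \<in> bd n A"
        using H unfolding hseg_def by blast
      have "y \<in> {p2 - 2*r .. p2 + 2*r}" using y that(1) by blast
      hence "\<bar>y - p2\<bar> \<le> 2*r" by auto
      have "((x,y),(x+1,y)) \<in> EB" using \<open>\<bar>y - p2\<bar> \<le> 2*r\<close> unfolding EB_def box_def p
        using x unfolding lo1_def hi1_def by auto
      hence "((x,y),(x+1,y)) \<in> EB" .
      thus "y \<in> (\<lambda>e. snd (fst e)) ` EB" by force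
    qed
    hence "card Y0 \<le> card ((\<lambda>e. snd (fst e)) ` EB)" by (rule card_mono[rotated]) (use finEB in auto)
    also have "\<dots> \<le> card EB" by (rule card_image_le) (use finEB in auto)
    finally show False using few that(2) unfolding EB_def by simp
  qed
  have bandv: "\<exists>x\<in>X0. \<not> vseg x" if "X0 \<subseteq> {p1 - 2*r .. p1 + 2*r}" "card X0 = nat r" for X0
  proof (rule ccontr)
    assume "\<not> (\<exists>x\<in>X0. \<not> vseg x)"
    hence H: "vseg x" if "x \<in> X0" for x using that by blast
    have "X0 \<subseteq> (\<lambda>e. fst (fst e)) ` EB"
    proof
      fix x assume x: "x \<in> X0"
      then obtain y where y: "lo2 \<le> y" "y + 1 \<le> hi2" "((x,y),(x,y+1)) \<in> bd n A"
        using H unfolding vseg_def by blast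
      have "x \<in> {p1 - 2*r .. p1 + 2*r}" using x that(1) by blast
      hence "\<bar>x - p1\<bar> \<le> 2*r" by auto
      have "((x,y),(x,y+1)) \<in> EB" using \<open>\<bar>x - p1\<bar> \<le> 2*r\<close> unfolding EB_def box_def p
        using y unfolding lo2_def hi2_def by auto
      hence "((x,y),(x,y+1)) \<in> EB" .
      thus "x \<in> (\<lambda>e. fst (fst e)) ` EB" by force
    qed
    hence "card X0 \<le> card ((\<lambda>e. fst (fst e)) ` EB)" by (rule card_mono[rotated]) (use finEB in auto)
    also have "\<dots> \<le> card EB" by (rule card_image_le) (use finEB in auto)
    finally show False using few that(2) unfolding EB_def by simp
  qed
  have pureh: "((x,y) \<in> A) = ((x',y) \<in> A)"
    if "\<not> hseg y" "0 \<le> y" "y \<le> N" "lo1 \<le> x" "x \<le> hi1" "lo1 \<le> x'" "x' \<le> hi1" for x x' y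
  proof (rule ccontr)
    assume ne: "((x,y) \<in> A) \<noteq> ((x',y) \<in> A)"
    have "(x,y) \<in> grid_V n" "(x',y) \<in> grid_V n" using that unfolding grid_V_iff lo1_def hi1_def N_def by auto
    from row_edge[OF this ne] obtain x'' where "min x x' \<le> x''" "x'' < max x x'" "((x'',y),(x''+1,y)) \<in> bd n A"
      by blast
    hence "hseg y" unfolding hseg_def using that by (intro exI[of _ x'']) auto
    thus False using that(1) by simp
  qed
  have purev: "((x,y) \<in> A) = ((x,y') \<in> A)"
    if "\<not> vseg x" "0 \<le> x" "x \<le> N" "lo2 \<le> y" "y \<le> hi2" "lo2 \<le> y'" "y' \<le> hi2" for x y y'
  proof (rule ccontr)
    assume ne: "((x,y) \<in> A) \<noteq> ((x,y') \<in> A)"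
    have "(x,y) \<in> grid_V n" "(x,y') \<in> grid_V n" using that unfolding grid_V_iff lo2_def hi2_def N_def by auto
    from col_edge[OF this ne] obtain y'' where "min y y' \<le> y''" "y'' < max y y'" "((x,y''),(x,y''+1)) \<in> bd n A"
      by blast
    hence "vseg x" unfolding vseg_def using that by (intro exI[of _ y'']) auto
    thus False using that(1) by simp
  qed
  obtain yt where yt: "(p2 + r < yt \<and> yt \<le> N \<and> yt \<le> p2 + 2*r \<and> \<not> hseg yt) \<or> (yt = N + 1 \<and> N \<le> p2 + 2*r)"
  proof (cases "p2 + 2*r < N")
    case True
    have "{p2 + r + 1 .. p2 + 2*r} \<subseteq> {p2 - 2*r .. p2 + 2*r}" "card {p2 + r + 1 .. p2 + 2*r} = nat r"
      using r by auto
    from bandh[OF this] obtain y where "y \<in> {p2 + r + 1 .. p2 + 2*r}" "\<not> hseg y" by blast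
    thus ?thesis using True by (intro that[of y]) auto
  next
    case False thus ?thesis by (intro that[of "N+1"]) auto
  qed
  obtain yb where yb: "(p2 - 2*r \<le> yb \<and> yb < p2 - r \<and> 0 \<le> yb \<and> \<not> hseg yb) \<or> (yb = -1 \<and> p2 - 2*r \<le> 0)"
  proof (cases "0 < p2 - 2*r")
    case True
    have "{p2 - 2*r .. p2 - r - 1} \<subseteq> {p2 - 2*r .. p2 + 2*r}" "card {p2 - 2*r .. p2 - r - 1} = nat r"
      using r by auto
    from bandh[OF this] obtain y where "y \<in> {p2 - 2*r .. p2 - r - 1}" "\<not> hseg y" by blast
    thus ?thesis using True by (intro that[of y]) auto
  next
    case False thus ?thesis by (intro that[of "-1"]) auto
  qed
  obtain xr where xr: "(p1 + r < xr \<and> xr \<le> N \<and> xr \<le> p1 + 2*r \<and> \<not> vseg xr) \<or> (xr = N + 1 \<and> N \<le> p1 + 2*r)"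
  proof (cases "p1 + 2*r < N")
    case True
    have "{p1 + r + 1 .. p1 + 2*r} \<subseteq> {p1 - 2*r .. p1 + 2*r}" "card {p1 + r + 1 .. p1 + 2*r} = nat r"
      using r by auto
    from bandv[OF this] obtain x where "x \<in> {p1 + r + 1 .. p1 + 2*r}" "\<not> vseg x" by blast
    thus ?thesis using True by (intro that[of x]) auto
  next
    case False thus ?thesis by (intro that[of "N+1"]) auto
  qed
  obtain xl where xl: "(p1 - 2*r \<le> xl \<and> xl < p1 - r \<and> 0 \<le> xl \<and> \<not> vseg xl) \<or> (xl = -1 \<and> p1 - 2*r \<le> 0)"
  proof (cases "0 < p1 - 2*r")
    case True
    have "{p1 - 2*r .. p1 - r - 1} \<subseteq> {p1 - 2*r .. p1 + 2*r}" "card {p1 - 2*r .. p1 - r - 1} = nat r"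
      using r by auto
    from bandv[OF this] obtain x where "x \<in> {p1 - 2*r .. p1 - r - 1}" "\<not> vseg x" by blast
    thus ?thesis using True by (intro that[of x]) auto
  next
    case False thus ?thesis by (intro that[of "-1"]) auto
  qed
  obtain yr where yr: "0 \<le> yr" "yr \<le> N" "lo2 \<le> yr" "yr \<le> hi2" "\<not> hseg yr"
  proof -
    have "\<not> (N \<le> p2 + 2*r \<and> p2 - 2*r \<le> 0)" using rN by linarith
    hence "(p2 + r < yt \<and> yt \<le> N \<and> yt \<le> p2 + 2*r \<and> \<not> hseg yt) \<or> (p2 - 2*r \<le> yb \<and> yb < p2 - r \<and> 0 \<le> yb \<and> \<not> hseg yb)"
      using yt yb by auto
    thus ?thesis
    proof
      assume h: "p2 + r < yt \<and> yt \<le> N \<and> yt \<le> p2 + 2*r \<and> \<not> hseg yt"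
      show ?thesis by (rule that[of yt]) (use h pV r in \<open>auto simp: lo2_def hi2_def\<close>)
    next
      assume h: "p2 - 2*r \<le> yb \<and> yb < p2 - r \<and> 0 \<le> yb \<and> \<not> hseg yb"
      show ?thesis by (rule that[of yb]) (use h pV r in \<open>auto simp: lo2_def hi2_def\<close>)
    qed
  qed
  obtain xc where xc: "0 \<le> xc" "xc \<le> N" "lo1 \<le> xc" "xc \<le> hi1" "\<not> vseg xc"
  proof -
    have "\<not> (N \<le> p1 + 2*r \<and> p1 - 2*r \<le> 0)" using rN by linarith
    hence "(p1 + r < xr \<and> xr \<le> N \<and> xr \<le> p1 + 2*r \<and> \<not> vseg xr) \<or> (p1 - 2*r \<le> xl \<and> xl < p1 - r \<and> 0 \<le> xl \<and> \<not> vseg xl)"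
      using xr xl by auto
    thus ?thesis
    proof
      assume h: "p1 + r < xr \<and> xr \<le> N \<and> xr \<le> p1 + 2*r \<and> \<not> vseg xr"
      show ?thesis by (rule that[of xr]) (use h pV r in \<open>auto simp: lo1_def hi1_def\<close>)
    next
      assume h: "p1 - 2*r \<le> xl \<and> xl < p1 - r \<and> 0 \<le> xl \<and> \<not> vseg xl"
      show ?thesis by (rule that[of xl]) (use h pV r in \<open>auto simp: lo1_def hi1_def\<close>)
    qed
  qed
  define \<tau> where "\<tau> = ((xc, yr) \<in> A)"
  have hl: "lo1 \<le> p1" "p1 \<le> hi1" "lo2 \<le> p2" "p2 \<le> hi2" "0 \<le> lo1" "hi1 \<le> N" "0 \<le> lo2" "hi2 \<le> N"
    using pV r unfolding lo1_def hi1_def lo2_def hi2_def by auto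
  have SL: "((xl, y) \<in> A) = \<tau>" if "0 \<le> xl" "lo2 \<le> y" "y \<le> hi2" for y
  proof -
    have x: "p1 - 2*r \<le> xl \<and> xl < p1 - r \<and> \<not> vseg xl" using xl that by auto
    have "((xl, y) \<in> A) = ((xl, yr) \<in> A)" using purev[of xl y yr] x that yr hl by auto
    also have "\<dots> = ((xc, yr) \<in> A)" using pureh[of yr xl xc] x that yr xc hl r unfolding lo1_def hi1_def by auto
    finally show ?thesis unfolding \<tau>_def .
  qed
  have SR: "((xr, y) \<in> A) = \<tau>" if "xr \<le> N" "lo2 \<le> y" "y \<le> hi2" for y
  proof -
    have x: "p1 + r < xr \<and> xr \<le> p1 + 2*r \<and> \<not> vseg xr" using xr that by auto
    have "((xr, y) \<in> A) = ((xr, yr) \<in> A)" using purev[of xr y yr] x that yr hl pV r by auto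
    also have "\<dots> = ((xc, yr) \<in> A)" using pureh[of yr xr xc] x that yr xc hl r pV unfolding lo1_def hi1_def by auto
    finally show ?thesis unfolding \<tau>_def .
  qed
  have SB: "((x, yb) \<in> A) = \<tau>" if "0 \<le> yb" "lo1 \<le> x" "x \<le> hi1" for x
  proof -
    have y: "p2 - 2*r \<le> yb \<and> yb < p2 - r \<and> \<not> hseg yb" using yb that by auto
    have "((x, yb) \<in> A) = ((xc, yb) \<in> A)" using pureh[of yb x xc] y that xc hl by auto
    also have "\<dots> = ((xc, yr) \<in> A)" using purev[of xc yb yr] y that yr xc hl r unfolding lo2_def hi2_def by auto
    finally show ?thesis unfolding \<tau>_def .
  qed
  have ST: "((x, yt) \<in> A) = \<tau>" if "yt \<le> N" "lo1 \<le> x" "x \<le> hi1" for x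
  proof -
    have y: "p2 + r < yt \<and> yt \<le> p2 + 2*r \<and> \<not> hseg yt" using yt that by auto
    have "((x, yt) \<in> A) = ((xc, yt) \<in> A)" using pureh[of yt x xc] y that xc hl pV r by auto
    also have "\<dots> = ((xc, yr) \<in> A)" using purev[of xc yt yr] y that yr xc hl r pV unfolding lo2_def hi2_def by auto
    finally show ?thesis unfolding \<tau>_def .
  qed
  define D where "D = {w \<in> grid_V n. (w \<in> A) \<noteq> \<tau>}"
  have Dcases: "D = (if \<tau> then grid_V n - A else A)" unfolding D_def using A(1) by auto
  have Dconn: "induces_connected D" using Dcases A by auto
  define ins where "ins w \<longleftrightarrow> xl < fst w \<and> fst w < xr \<and> yb < snd w \<and> snd w < yt" for w
  have insp: "ins p" "ins q" unfolding ins_def p q using xl xr yb yt pV qV pqd r by auto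
  obtain s where s: "s \<in> D" "ins s" using pq insp unfolding D_def by (cases "(p \<in> A) = \<tau>") auto
  have allin: "ins z" if "z \<in> D" for z
  proof (rule ccontr)
    assume "\<not> ins z"
    from crossing[OF Dconn s(1) that, of ins] s(2) this
    obtain w w' where ww: "w \<in> D" "w' \<in> D" "l1dist w w' = 1" "ins w" "\<not> ins w'" by blast
    obtain a b where w: "w = (a,b)" by (cases w)
    obtain c d where w': "w' = (c,d)" by (cases w')
    have "(a,b) \<in> grid_V n" using ww(1) unfolding D_def w by auto
    hence wV: "0 \<le> a" "a \<le> N" "0 \<le> b" "b \<le> N" unfolding grid_V_iff N_def by auto
    have "(c,d) \<in> grid_V n" using ww(2) unfolding D_def w' by auto
    hence w'V: "0 \<le> c" "c \<le> N" "0 \<le> d" "d \<le> N" unfolding grid_V_iff N_def by auto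
    have nt: "((c,d) \<in> A) \<noteq> \<tau>" using ww(2) unfolding D_def w' by auto
    have iw: "xl < a" "a < xr" "yb < b" "b < yt" using ww(4) unfolding ins_def w by auto
    have niw: "c \<le> xl \<or> xr \<le> c \<or> d \<le> yb \<or> yt \<le> d" using ww(5) unfolding ins_def w' by auto
    have ad: "(c = a + 1 \<and> d = b) \<or> (c = a \<and> d = b + 1) \<or> (a = c + 1 \<and> b = d) \<or> (a = c \<and> b = d + 1)"
      using ww(3) unfolding w w' l1dist_eq1 by (intro adj_cases) simp
    have b2: "lo2 \<le> b" "b \<le> hi2" using iw wV yb yt unfolding lo2_def hi2_def by auto
    have a1: "lo1 \<le> a" "a \<le> hi1" using iw wV xl xr unfolding lo1_def hi1_def by auto
    have "(c = xl \<and> d = b) \<or> (c = xr \<and> d = b) \<or> (d = yb \<and> c = a) \<or> (d = yt \<and> c = a)"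
      using ad iw niw by auto
    thus False
    proof (elim disjE conjE)
      assume "c = xl" "d = b" thus False using SL[of b] b2 w'V nt by auto
    next
      assume "c = xr" "d = b" thus False using SR[of b] b2 w'V nt by auto
    next
      assume "d = yb" "c = a" thus False using SB[of a] a1 w'V nt by auto
    next
      assume "d = yt" "c = a" thus False using ST[of a] a1 w'V nt by auto
    qed
  qed
  have "D \<subseteq> box p (2*r)"
  proof
    fix z assume z: "z \<in> D"
    obtain a b where zz: "z = (a,b)" by (cases z)
    have "(a,b) \<in> grid_V n" using z unfolding D_def zz by auto
    hence zV: "0 \<le> a" "a \<le> N" "0 \<le> b" "b \<le> N" unfolding grid_V_iff N_def by auto
    have "xl < a" "a < xr" "yb < b" "b < yt" using allin[OF z] unfolding ins_def zz by auto
    hence "\<bar>a - p1\<bar> \<le> 2*r" "\<bar>b - p2\<bar> \<le> 2*r" using xl xr yb yt zV by auto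
    thus "z \<in> box p (2*r)" unfolding box_def zz p by simp
  qed
  thus ?thesis using Dcases by (cases \<tau>) auto
qed

lemma geom_sqrt2:
  "(\<Sum>j\<le>m. sqrt 2 ^ j) \<le> (2 + sqrt 2) * sqrt 2 ^ m"
proof (induction m)
  case 0 show ?case by simp
next
  case (Suc m)
  have s2: "sqrt 2 * sqrt 2 = (2::real)" by simp
  have "(\<Sum>j\<le>Suc m. sqrt 2 ^ j) = (\<Sum>j\<le>m. sqrt 2 ^ j) + sqrt 2 ^ Suc m" by simp
  also have "\<dots> \<le> (2 + sqrt 2) * sqrt 2 ^ m + sqrt 2 ^ Suc m" using Suc by simp
  also have "(2 + sqrt 2) * sqrt 2 ^ m = (sqrt 2 + 1) * sqrt 2 ^ Suc m"
    using s2 by (simp add: algebra_simps)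
  finally show ?case by (simp add: algebra_simps)
qed

lemma geom_sum_bound:
  fixes I :: "nat set" and Y :: real
  assumes "finite I" "\<And>k. k \<in> I \<Longrightarrow> k \<le> n \<and> 2 ^ (n - k) \<le> Y" "0 \<le> Y"
  shows "(\<Sum>k\<in>I. sqrt (2 ^ (n - k))) \<le> (2 + sqrt 2) * sqrt Y"
proof (cases "I = {}")
  case True thus ?thesis using assms(3) by simp
next
  case False
  define J where "J = (\<lambda>k. n - k) ` I"
  have inj: "inj_on (\<lambda>k. n - k) I" using assms(2) by (intro inj_onI) (metis diff_diff_cancel)
  have finJ: "finite J" "J \<noteq> {}" using assms(1) False unfolding J_def by auto
  define m where "m = Max J"
  have Jm: "J \<subseteq> {..m}" using finJ unfolding m_def by auto
  have mJ: "m \<in> J" using finJ unfolding m_def by simp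
  have "(\<Sum>k\<in>I. sqrt (2 ^ (n - k))) = (\<Sum>j\<in>J. sqrt (2 ^ j))"
    unfolding J_def by (simp add: sum.reindex[OF inj])
  also have "\<dots> = (\<Sum>j\<in>J. sqrt 2 ^ j)" by (simp add: real_sqrt_power)
  also have "\<dots> \<le> (\<Sum>j\<le>m. sqrt 2 ^ j)" by (rule sum_mono2) (use Jm in auto)
  also have "\<dots> \<le> (2 + sqrt 2) * sqrt 2 ^ m" by (rule geom_sqrt2)
  also have "sqrt 2 ^ m \<le> sqrt Y"
  proof -
    obtain k where "k \<in> I" "m = n - k" using mJ unfolding J_def by auto
    hence "2 ^ m \<le> Y" using assms(2) by auto
    hence "sqrt (2 ^ m) \<le> sqrt Y" by simp
    thus ?thesis by (simp add: real_sqrt_power)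
  qed
  hence "(2 + sqrt 2) * sqrt 2 ^ m \<le> (2 + sqrt 2) * sqrt Y" by (intro mult_left_mono) auto
  finally show ?thesis .
qed

lemma a1: "(2::real) powr (- real m) = 1 / 2 ^ m"
proof -
  have "(2::real) powr real m = 2^m" by (rule powr_realpow) simp
  moreover have "(2::real) powr (- real m) = inverse (2 powr real m)" by (rule powr_minus)
  ultimately show ?thesis by (simp add: inverse_eq_divide)
qed
lemma a3: "(4::real) powr (- real m) = 1 / 4 ^ m"
proof -
  have "(4::real) powr real m = 4^m" by (rule powr_realpow) simp
  moreover have "(4::real) powr (- real m) = inverse (4 powr real m)" by (rule powr_minus)
  ultimately show ?thesis by (simp add: inverse_eq_divide)
qed
lemma a4: "k \<le> n \<Longrightarrow> (2::real) powr (real n - real k) = 2 ^ (n - k)"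
proof -
  assume "k \<le> n"
  hence "real n - real k = real (n - k)" by simp
  moreover have "(2::real) powr real (n - k) = 2^(n-k)" by (rule powr_realpow) simp
  ultimately show ?thesis by metis
qed

lemma powr_conv1: "k \<le> n \<Longrightarrow> (2::real) powr (- real n - 1 - real k) = 2 ^ (n - k) / (2 * (2 ^ n)^2)"
proof -
  assume k: "k \<le> n"
  have e: "- real n - 1 - real k = - real (n + 1 + k)" by simp
  have "(2::real) powr (- real n - 1 - real k) = 1 / 2 ^ (n + 1 + k)"
    by (simp only: e a1)
  also have "(2::real) ^ (n + 1 + k) * 2 ^ (n - k) = 2 * (2^n)^2"
  proof -
    have "(2::real) ^ (n + 1 + k) * 2 ^ (n - k) = 2 ^ (n + 1 + k + (n - k))" by (simp only: power_add)
    also have "n + 1 + k + (n - k) = 1 + n + n" using k by simp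
    also have "(2::real) ^ (1 + n + n) = 2 * (2^n * 2^n)" by (simp only: power_add power_one_right)
    finally show ?thesis by (simp only: power2_eq_square)
  qed
  hence "1 / (2::real) ^ (n + 1 + k) = 2 ^ (n - k) / (2 * (2 ^ n)^2)"
    by (simp add: divide_simps) (metis mult.commute)
  finally show ?thesis .
qed

lemma powr_conv2: "(4::real) powr (- real n) = 1 / (2 ^ n)^2"
proof -
  have "(4::real) powr (- real n) = 1 / 4 ^ n" by (rule a3)
  also have "(4::real) ^ n = (2 ^ n)^2"
  proof -
    have "(4::real) ^ n = (2 * 2) ^ n" by simp
    also have "\<dots> = 2 ^ n * 2 ^ n" by (rule power_mult_distrib)
    finally show ?thesis by (simp add: power2_eq_square)
  qed
  finally show ?thesis .
qed

lemma powr_conv3: "k \<le> n \<Longrightarrow> (2::real) powr (real n - real k) = 2 ^ (n - k)"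
  by (rule a4)

locale gsetup =
  fixes n :: nat and C2 C4 :: real and \<mu> :: "nat list \<Rightarrow> vtx \<Rightarrow> real"
  assumes n2: "n \<ge> 2"
    and C2: "C2 \<ge> 1/2" and C4: "C4 \<ge> 1/2"
    and mass0: "\<forall>t\<in>Tall n. smeasure (\<mu> t) (grid_V n) = 0"
    and P2: "\<forall>t\<in>Tall n. \<forall>t'\<in>Tall n - {t}.
               l1setdist (supp n (\<mu> t)) (supp n (\<mu> t'))
                 \<ge> ereal ((1 / C2) * 2 powr (real n - real (max (length t) (length t'))))"
    and P4: "\<forall>t\<in>Tall n. \<forall>A. A \<subseteq> grid_V n \<longrightarrow>
               \<bar>smeasure (\<mu> t) A\<bar> \<le> C4 * min (2 powr (- real n - 1 - real (length t)))
                                               (4 powr (- real n) * (l1diam A + 1))"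
    and P5: "\<forall>t\<in>Tall n. \<exists>u\<in>grid_V n. induces_connected (supp n (\<mu> t) \<union> {u})"
begin

definition PhiS :: "vtx set \<Rightarrow> real" where
  "PhiS A = (\<Sum>k\<in>{0..n-2}. L2_set (\<lambda>t. smeasure (\<mu> t) A) (Tk k))"

lemma Tk_fin: "finite (Tk k)"
proof -
  have "Tk k = {xs. set xs \<subseteq> {1,2,3,4} \<and> length xs = k}" unfolding Tk_def by auto
  thus ?thesis using finite_lists_length_eq[of "{1,2,3,4::nat}" k] by simp
qed

lemma Tk_sub: "k \<in> {0..n-2} \<Longrightarrow> Tk k \<subseteq> Tall n"
  unfolding Tall_def by auto

lemma Tk_len: "t \<in> Tk k \<Longrightarrow> length t = k"
  unfolding Tk_def by auto

lemma supp_sub: "supp n m \<subseteq> grid_V n"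
  unfolding supp_def by auto

lemma sepd:
  assumes "t \<in> Tall n" "t' \<in> Tall n" "t \<noteq> t'" "x \<in> supp n (\<mu> t)" "y \<in> supp n (\<mu> t')"
  shows "l1dist x y \<ge> (1 / C2) * 2 powr (real n - real (max (length t) (length t')))"
proof -
  have "ereal ((1 / C2) * 2 powr (real n - real (max (length t) (length t'))))
        \<le> l1setdist (supp n (\<mu> t)) (supp n (\<mu> t'))" using P2 assms(1-3) by auto
  also have "\<dots> \<le> ereal (l1dist x y)" unfolding l1setdist_def
    using assms(4,5) by (intro INF_lower2[of "(x,y)"]) auto
  finally show ?thesis by simp
qed

lemma sm_fin: "finite A \<Longrightarrow> smeasure m A = (\<Sum>v\<in>A. m v)" unfolding smeasure_def by simp

lemma sm_compl:
  assumes "t \<in> Tall n" "A \<subseteq> grid_V n"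
  shows "smeasure (\<mu> t) (grid_V n - A) = - smeasure (\<mu> t) A"
proof -
  have "smeasure (\<mu> t) (grid_V n) = smeasure (\<mu> t) (grid_V n - A) + smeasure (\<mu> t) A"
    unfolding smeasure_def using assms(2) finite_V
    by (metis Diff_partition sum.subset_diff)
  thus ?thesis using mass0 assms(1) by simp
qed

lemma nz_point:
  assumes "smeasure m D \<noteq> 0" "D \<subseteq> grid_V n"
  shows "\<exists>x\<in>D. x \<in> supp n m"
proof (rule ccontr)
  assume "\<not> ?thesis"
  hence "\<forall>x\<in>D. m x = 0" using assms(2) unfolding supp_def by auto
  hence "smeasure m D = 0" unfolding smeasure_def by simp
  thus False using assms(1) by simp
qed

lemma cut_point:
  assumes "t \<in> Tall n" "A \<subseteq> grid_V n" "smeasure (\<mu> t) A \<noteq> 0"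
  shows "\<exists>p q. p \<in> supp n (\<mu> t) \<and> q \<in> grid_V n \<and> l1dist p q = 1 \<and> (p \<in> A) \<noteq> (q \<in> A)"
proof -
  obtain x where x: "x \<in> A" "x \<in> supp n (\<mu> t)" using nz_point[OF assms(3,2)] by blast
  have "smeasure (\<mu> t) (grid_V n - A) \<noteq> 0" using sm_compl[OF assms(1,2)] assms(3) by simp
  then obtain y where y: "y \<in> grid_V n - A" "y \<in> supp n (\<mu> t)" using nz_point[of "\<mu> t" "grid_V n - A"] by blast
  obtain u where u: "u \<in> grid_V n" "induces_connected (supp n (\<mu> t) \<union> {u})" using P5 assms(1) by blast
  from crossing[OF u(2), of x y "\<lambda>v. v \<in> A"] x y
  obtain w w' where ww: "w \<in> supp n (\<mu> t) \<union> {u}" "w' \<in> supp n (\<mu> t) \<union> {u}" "l1dist w w' = 1" "w \<in> A" "w' \<notin> A"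
    by blast
  have wV: "w \<in> grid_V n" "w' \<in> grid_V n" using ww(1,2) u(1) supp_sub by auto
  show ?thesis
  proof (cases "w \<in> supp n (\<mu> t)")
    case True thus ?thesis using ww wV by blast
  next
    case False
    hence "w = u" using ww(1) by simp
    have "w \<noteq> w'" using ww(4,5) by auto
    hence "w' \<in> supp n (\<mu> t)" using ww(2) \<open>w = u\<close> by auto
    moreover have "l1dist w' w = 1" using ww(3) l1dist_sym by simp
    ultimately show ?thesis using ww wV by blast
  qed
qed

end

lemma box_l1: "u \<in> box p R \<Longrightarrow> v \<in> box p R \<Longrightarrow> l1dist u v \<le> 4 * real_of_int R"
  unfolding box_def l1dist_def by (simp add: abs_if split: if_splits; linarith)

lemma box_close: "v \<in> box p R \<Longrightarrow> v \<in> box p' R \<Longrightarrow> l1dist p p' \<le> 4 * real_of_int R"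
  unfolding box_def l1dist_def by (simp add: abs_if split: if_splits; linarith)

lemma box_diam: "X \<subseteq> box p R \<Longrightarrow> finite X \<Longrightarrow> 0 \<le> R \<Longrightarrow> l1diam X \<le> 4 * real_of_int R"
  by (rule l1diam_le) (auto intro: box_l1)

context gsetup
begin

lemma Tall_len: "t \<in> Tall n \<Longrightarrow> length t \<le> n - 2"
  unfolding Tall_def Tk_def by auto

lemma bound_len:
  assumes "t \<in> Tall n" "A \<subseteq> grid_V n"
  shows "\<bar>smeasure (\<mu> t) A\<bar> \<le> C4 * (2 ^ (n - length t) / (2 * (2^n)^2))"
proof -
  have "\<bar>smeasure (\<mu> t) A\<bar> \<le> C4 * min (2 powr (- real n - 1 - real (length t)))
                                               (4 powr (- real n) * (l1diam A + 1))"
    using P4 assms by blast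
  also have "\<dots> \<le> C4 * 2 powr (- real n - 1 - real (length t))"
    using C4 by (intro mult_left_mono) auto
  also have "2 powr (- real n - 1 - real (length t)) = 2 ^ (n - length t) / (2 * (2^n)^2)"
    using Tall_len[OF assms(1)] by (intro powr_conv1) simp
  finally show ?thesis .
qed

lemma bound_diam:
  assumes "t \<in> Tall n" "A \<subseteq> grid_V n"
  shows "\<bar>smeasure (\<mu> t) A\<bar> \<le> C4 * ((l1diam A + 1) / (2^n)^2)"
proof -
  have "\<bar>smeasure (\<mu> t) A\<bar> \<le> C4 * min (2 powr (- real n - 1 - real (length t)))
                                               (4 powr (- real n) * (l1diam A + 1))"
    using P4 assms by blast
  also have "\<dots> \<le> C4 * (4 powr (- real n) * (l1diam A + 1))"
    using C4 by (intro mult_left_mono) auto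
  also have "4 powr (- real n) * (l1diam A + 1) = (l1diam A + 1) / (2^n)^2"
    by (simp add: powr_conv2)
  finally show ?thesis .
qed

lemma sepd':
  assumes "t \<in> Tk k" "t' \<in> Tk k'" "k \<in> {0..n-2}" "k' \<in> {0..n-2}" "t \<noteq> t'"
    "x \<in> supp n (\<mu> t)" "y \<in> supp n (\<mu> t')"
  shows "l1dist x y \<ge> (1 / C2) * 2 ^ (n - max k k')"
proof -
  have "l1dist x y \<ge> (1 / C2) * 2 powr (real n - real (max (length t) (length t')))"
    using sepd[of t t' x y] assms Tk_sub by blast
  moreover have "max (length t) (length t') = max k k'" using assms(1,2) Tk_len by simp
  moreover have "max k k' \<le> n" using assms(3,4) by auto
  ultimately show ?thesis using powr_conv3[of "max k k'" n] by (simp add: of_nat_max)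
qed

end

context gsetup
begin

lemma core:
  assumes A: "A \<subseteq> grid_V n" "A \<noteq> {}" "grid_V n - A \<noteq> {}"
    "induces_connected A" "induces_connected (grid_V n - A)"
  shows "PhiS A \<le> C4 * (2 + 10 * C2) / (2^n)^2 * real (card (bd n A))"
proof -
  define NN :: real where "NN = 2^n"
  have NNpos: "NN > 0" unfolding NN_def by simp
  have C2pos: "C2 > 0" using C2 by simp
  have C4pos: "C4 > 0" using C4 by simp
  define b where "b = card (bd n A)"
  have b1: "b \<ge> 1"
  proof -
    obtain x where "x \<in> A" using A(2) by blast
    moreover obtain y where "y \<in> grid_V n - A" using A(3) by blast
    ultimately have "bd n A \<noteq> {}" using bd_nonempty[of x A y n] A(1) by blast
    thus ?thesis unfolding b_def using finite_bd[of n A] by (simp add: Suc_le_eq card_gt_0_iff)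
  qed
  define D where "D = (if l1diam A \<le> l1diam (grid_V n - A) then A else grid_V n - A)"
  define d where "d = l1diam D"
  have DV: "D \<subseteq> grid_V n" unfolding D_def using A by auto
  have Dne: "D \<noteq> {}" unfolding D_def using A by auto
  have finD: "finite D" using DV finite_V finite_subset by blast
  have dA: "d \<le> l1diam A" "d \<le> l1diam (grid_V n - A)" unfolding d_def D_def by auto
  have d0: "0 \<le> d" unfolding d_def using l1diam_nonneg[of D] finD by auto
  have dD: "l1dist x y \<le> d" if "x \<in> D" "y \<in> D" for x y
    unfolding d_def using l1diam_ge[OF finD that] .
  have d2N: "d \<le> 2 * NN" unfolding d_def NN_def using l1diam_V[OF DV] by simp
  have db: "d + 1 \<le> 2 * real b"
  proof (cases "b \<le> 2^n")
    case True
    from global_iso[OF A(1) A(4) A(5)] True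
    have "l1diam A \<le> real b \<or> l1diam (grid_V n - A) \<le> real b" unfolding b_def by simp
    hence "d \<le> real b" using dA by linarith
    thus ?thesis using b1 by simp
  next
    case False
    hence "real b \<ge> 2^n + 1" by (metis not_le of_nat_le_iff of_nat_numeral of_nat_power Suc_le_eq of_nat_Suc add.commute)
    thus ?thesis using d2N unfolding NN_def by linarith
  qed
  define sm where "sm t = smeasure (\<mu> t) A" for t
  have smD: "\<bar>sm t\<bar> = \<bar>smeasure (\<mu> t) D\<bar>" if "t \<in> Tall n" for t
    unfolding sm_def D_def using sm_compl[OF that A(1)] by auto
  have bound1: "\<bar>sm t\<bar> \<le> C4 * ((d + 1) / NN^2)" if "t \<in> Tall n" for t
    using smD[OF that] bound_diam[OF that DV] unfolding d_def NN_def by simp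
  have bound2: "\<bar>sm t\<bar> \<le> C4 * (2 ^ (n - length t) / (2 * NN^2))" if "t \<in> Tall n" for t
    using bound_len[OF that A(1)] unfolding sm_def NN_def .
  define sep where "sep k = (1 / C2) * 2 ^ (n - k)" for k :: nat
  have sep_pos: "sep k > 0" for k unfolding sep_def using C2pos by simp
  define Lc where "Lc = {k\<in>{0..n-2}. d < sep k}"
  define Lf where "Lf = {k\<in>{0..n-2}. sep k \<le> d}"
  define L2k where "L2k k = L2_set sm (Tk k)" for k
  have split: "PhiS A = sum L2k Lc + sum L2k Lf"
  proof -
    have "{0..n-2} = Lc \<union> Lf" "Lc \<inter> Lf = {}" unfolding Lc_def Lf_def by auto
    hence "sum L2k {0..n-2} = sum L2k Lc + sum L2k Lf"
      by (metis finite_Un finite_atLeastAtMost sum.union_disjoint)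
    thus ?thesis unfolding PhiS_def L2k_def sm_def by simp
  qed
  have coarse: "sum L2k Lc \<le> C4 * ((d + 1) / NN^2)"
  proof -
    define U where "U = (\<Union>k\<in>Lc. Tk k)"
    have finLc: "finite Lc" unfolding Lc_def by simp
    have UT: "U \<subseteq> Tall n" unfolding U_def Lc_def using Tk_sub by blast
    have finU: "finite U" unfolding U_def using finLc Tk_fin by blast
    have "sum L2k Lc \<le> (\<Sum>k\<in>Lc. \<Sum>t\<in>Tk k. \<bar>sm t\<bar>)"
      unfolding L2k_def by (intro sum_mono L2_set_le_sum_abs)
    also have "\<dots> = (\<Sum>t\<in>U. \<bar>sm t\<bar>)" unfolding U_def
      by (rule sum.UNION_disjoint[symmetric]) (use finLc Tk_fin in \<open>auto dest: Tk_len\<close>)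
    also have "\<dots> = (\<Sum>t\<in>{t\<in>U. sm t \<noteq> 0}. \<bar>sm t\<bar>)"
      by (rule sum.mono_neutral_right) (use finU in auto)
    also have "\<dots> \<le> real (card {t\<in>U. sm t \<noteq> 0}) * (C4 * ((d + 1) / NN^2))"
      by (rule sum_bounded_above) (use bound1 UT in auto)
    also have "card {t\<in>U. sm t \<noteq> 0} \<le> Suc 0"
    proof (subst card_le_Suc0_iff_eq)
      show "finite {t\<in>U. sm t \<noteq> 0}" using finU by simp
      show "\<forall>t1\<in>{t\<in>U. sm t \<noteq> 0}. \<forall>t2\<in>{t\<in>U. sm t \<noteq> 0}. t1 = t2"
      proof (intro ballI, rule ccontr)
        fix t1 t2 assume t1: "t1 \<in> {t\<in>U. sm t \<noteq> 0}" and t2: "t2 \<in> {t\<in>U. sm t \<noteq> 0}" and ne: "t1 \<noteq> t2"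
        obtain k1 where k1: "k1 \<in> Lc" "t1 \<in> Tk k1" using t1 unfolding U_def by blast
        obtain k2 where k2: "k2 \<in> Lc" "t2 \<in> Tk k2" using t2 unfolding U_def by blast
        have "smeasure (\<mu> t1) D \<noteq> 0" using t1 smD[of t1] UT by auto
        then obtain x where x: "x \<in> D" "x \<in> supp n (\<mu> t1)" using nz_point[OF _ DV] by blast
        have "smeasure (\<mu> t2) D \<noteq> 0" using t2 smD[of t2] UT by auto
        then obtain y where y: "y \<in> D" "y \<in> supp n (\<mu> t2)" using nz_point[OF _ DV] by blast
        have k12: "k1 \<in> {0..n-2}" "k2 \<in> {0..n-2}" using k1 k2 unfolding Lc_def by auto
        have "l1dist x y \<ge> sep (max k1 k2)" using sepd'[OF k1(2) k2(2) k12 ne x(2) y(2)] unfolding sep_def .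
        moreover have "sep (max k1 k2) > d" using k1(1) k2(1) unfolding Lc_def by (cases "k1 \<le> k2") (auto simp: max_def)
        moreover have "l1dist x y \<le> d" using dD x(1) y(1) .
        ultimately show False by linarith
      qed
    qed
    hence "real (card {t\<in>U. sm t \<noteq> 0}) * (C4 * ((d + 1) / NN^2)) \<le> 1 * (C4 * ((d + 1) / NN^2))"
      using C4pos d0 NNpos by (intro mult_right_mono) auto
    finally show ?thesis by simp
  qed
  define Ct where "Ct k = {t\<in>Tk k. sm t \<noteq> 0}" for k
  have cardCt: "real (card (Ct k)) \<le> 16 * real b / sep k" if k: "k \<in> Lf" for k
  proof -
    define s where "s = sep k"
    have s0: "s > 0" unfolding s_def using sep_pos .
    have sd: "s \<le> d" using k unfolding s_def Lf_def by auto
    have k0: "k \<in> {0..n-2}" using k unfolding Lf_def by auto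
    have CtT: "Ct k \<subseteq> Tall n" unfolding Ct_def using Tk_sub[OF k0] by auto
    have finCt: "finite (Ct k)" unfolding Ct_def using Tk_fin by simp
    have ex: "\<forall>t\<in>Ct k. \<exists>pq. fst pq \<in> supp n (\<mu> t) \<and> snd pq \<in> grid_V n \<and> l1dist (fst pq) (snd pq) = 1
               \<and> (fst pq \<in> A) \<noteq> (snd pq \<in> A)"
    proof
      fix t assume t: "t \<in> Ct k"
      have "smeasure (\<mu> t) A \<noteq> 0" using t unfolding Ct_def sm_def by simp
      from cut_point[OF _ A(1) this] t CtT obtain p q where
        "p \<in> supp n (\<mu> t) \<and> q \<in> grid_V n \<and> l1dist p q = 1 \<and> (p \<in> A) \<noteq> (q \<in> A)" by blast
      thus "\<exists>pq. fst pq \<in> supp n (\<mu> t) \<and> snd pq \<in> grid_V n \<and> l1dist (fst pq) (snd pq) = 1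
               \<and> (fst pq \<in> A) \<noteq> (snd pq \<in> A)" by (intro exI[of _ "(p,q)"]) simp
    qed
    from bchoice[OF ex] obtain PQ where PQ: "\<forall>t\<in>Ct k. fst (PQ t) \<in> supp n (\<mu> t) \<and> snd (PQ t) \<in> grid_V n
        \<and> l1dist (fst (PQ t)) (snd (PQ t)) = 1 \<and> (fst (PQ t) \<in> A) \<noteq> (snd (PQ t) \<in> A)" by blast
    define pt where "pt t = fst (PQ t)" for t
    define qt where "qt t = snd (PQ t)" for t
    have pt: "pt t \<in> supp n (\<mu> t)" "pt t \<in> grid_V n" "qt t \<in> grid_V n" "l1dist (pt t) (qt t) = 1"
      "(pt t \<in> A) \<noteq> (qt t \<in> A)" if "t \<in> Ct k" for t
      using PQ that supp_sub unfolding pt_def qt_def by auto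
    have far: "l1dist (pt t) (pt t') \<ge> s" if "t \<in> Ct k" "t' \<in> Ct k" "t \<noteq> t'" for t t'
    proof -
      have "t \<in> Tk k" "t' \<in> Tk k" using that unfolding Ct_def by auto
      from sepd'[OF this k0 k0 that(3) pt(1)[OF that(1)] pt(1)[OF that(2)]]
      show ?thesis unfolding s_def sep_def by simp
    qed
    show ?thesis
    proof (cases "s \<le> 8")
      case True
      have inj: "inj_on pt (Ct k)"
      proof (rule inj_onI, rule ccontr)
        fix t t' assume "t \<in> Ct k" "t' \<in> Ct k" "pt t = pt t'" "t \<noteq> t'"
        thus False using far[of t t'] s0 by (simp add: l1dist_def)
      qed
      define G where "G = fst ` bd n A \<union> snd ` bd n A"
      have "pt ` Ct k \<subseteq> G"
      proof
        fix v assume "v \<in> pt ` Ct k"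
        then obtain t where t: "t \<in> Ct k" "v = pt t" by blast
        from adj_bd[OF pt(2,3,4,5)[OF t(1)]] show "v \<in> G" unfolding G_def t(2) by force
      qed
      hence "card (pt ` Ct k) \<le> card G" unfolding G_def using finite_bd by (intro card_mono) auto
      also have "card G \<le> card (fst ` bd n A) + card (snd ` bd n A)" unfolding G_def by (rule card_Un_le)
      also have "\<dots> \<le> b + b" unfolding b_def by (intro add_mono card_image_le finite_bd)
      finally have "card (Ct k) \<le> 2 * b" using card_image[OF inj] by simp
      hence "real (card (Ct k)) \<le> 2 * real b" by simp
      also have "2 * real b \<le> 16 * real b / s" using True s0 mult_right_mono[OF True, of "real b"] by (simp add: field_simps)
      finally show ?thesis unfolding s_def .
    next
      case False
      define r :: int where "r = \<lceil>s / 8\<rceil> - 1"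
      have r1: "1 \<le> r" using False unfolding r_def by (simp add: le_ceiling_iff)
      have rr: "real_of_int r = real_of_int \<lceil>s / 8\<rceil> - 1" unfolding r_def by simp
      have cc: "real_of_int \<lceil>s / 8\<rceil> - 1 < s / 8" "s / 8 \<le> real_of_int \<lceil>s / 8\<rceil>" using ceiling_correct[of "s/8"] by auto
      have r1': "1 \<le> real_of_int r" using r1 by simp
      have r8: "8 * real_of_int r < s" using rr cc by linarith
      have r16: "s \<le> 16 * real_of_int r" using rr cc r1' by linarith
      have r4: "4 * r < 2^n"
      proof -
        have "real_of_int (4 * r) < real_of_int (2^n)" using r8 sd d2N unfolding NN_def by simp
        thus ?thesis by (simp only: of_int_less_iff)
      qed
      define EB where "EB t = {e \<in> bd n A. fst e \<in> box (pt t) (2*r) \<and> snd e \<in> box (pt t) (2*r)}" for t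
      have many: "nat r \<le> card (EB t)" if t: "t \<in> Ct k" for t
      proof (rule ccontr)
        assume "\<not> nat r \<le> card (EB t)"
        hence "card (EB t) < nat r" by simp
        from local_iso[OF A(1) A(4) A(5) pt(2,3,4,5)[OF t] r1 r4 this[unfolded EB_def]]
        have "A \<subseteq> box (pt t) (2*r) \<or> grid_V n - A \<subseteq> box (pt t) (2*r)" .
        hence "d \<le> 4 * real_of_int (2*r)"
        proof
          assume "A \<subseteq> box (pt t) (2*r)"
          moreover have "finite A" using A(1) finite_V finite_subset by blast
          ultimately have "l1diam A \<le> 4 * real_of_int (2*r)" using r1
            by (intro box_diam) auto
          thus ?thesis using dA by linarith
        next
          assume "grid_V n - A \<subseteq> box (pt t) (2*r)"
          hence "l1diam (grid_V n - A) \<le> 4 * real_of_int (2*r)" using finite_V r1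
            by (intro box_diam) auto
          thus ?thesis using dA by linarith
        qed
        thus False using r8 sd by simp
      qed
      have disj: "EB t \<inter> EB t' = {}" if "t \<in> Ct k" "t' \<in> Ct k" "t \<noteq> t'" for t t'
      proof (rule ccontr)
        assume "EB t \<inter> EB t' \<noteq> {}"
        then obtain e where "e \<in> EB t" "e \<in> EB t'" by blast
        hence "fst e \<in> box (pt t) (2*r)" "fst e \<in> box (pt t') (2*r)" unfolding EB_def by auto
        from box_close[OF this] have "l1dist (pt t) (pt t') \<le> 4 * real_of_int (2*r)" .
        thus False using far[OF that] r8 by simp
      qed
      have finEB: "finite (EB t)" for t unfolding EB_def using finite_bd by simp
      have "card (\<Union>t\<in>Ct k. EB t) = (\<Sum>t\<in>Ct k. card (EB t))"
        by (rule card_UN_disjoint) (use finCt finEB disj in auto)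
      also have "(\<Sum>t\<in>Ct k. card (EB t)) \<ge> card (Ct k) * nat r"
        using sum_bounded_below[of "Ct k" "nat r" "\<lambda>t. card (EB t)"] many by (simp add: mult.commute)
      moreover have "card (\<Union>t\<in>Ct k. EB t) \<le> b" unfolding b_def EB_def
        by (intro card_mono finite_bd) auto
      ultimately have cb: "card (Ct k) * nat r \<le> b" by linarith
      have "real (card (Ct k) * nat r) \<le> real b" using cb by (simp only: of_nat_le_iff)
      moreover have "real (nat r) = real_of_int r" using r1 by simp
      moreover have "real (card (Ct k) * nat r) = real (card (Ct k)) * real (nat r)" by (rule of_nat_mult)
      ultimately have "real (card (Ct k)) * real_of_int r \<le> real b" by metis
      hence "real (card (Ct k)) \<le> real b / real_of_int r" using r1' by (simp add: pos_le_divide_eq)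
      also have "real b / real_of_int r = 16 * real b / (16 * real_of_int r)" by simp
      also have "16 * real b / (16 * real_of_int r) \<le> 16 * real b / s"
        by (rule divide_left_mono) (use r16 s0 r1' in auto)
      finally show ?thesis unfolding s_def .
    qed
  qed
  have s16: "sqrt (16::real) = 4" by (rule real_sqrt_unique) simp_all
  have fineterm: "L2k k \<le> 2 * C4 * sqrt (real b * C2) * sqrt (2 ^ (n - k)) / NN^2" if k: "k \<in> Lf" for k
  proof -
    define X :: real where "X = 2 ^ (n - k)"
    have X0: "X > 0" unfolding X_def by simp
    have k0: "k \<in> {0..n-2}" using k unfolding Lf_def by auto
    have CtTk: "Ct k \<subseteq> Tk k" unfolding Ct_def by auto
    define c where "c = C4 * (X / (2 * NN^2))"
    have c0: "c \<ge> 0" unfolding c_def using C4pos X0 NNpos by simp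
    have "L2k k = L2_set (\<lambda>t. \<bar>sm t\<bar>) (Ct k)"
    proof -
      have "(\<Sum>t\<in>Tk k. (sm t)^2) = (\<Sum>t\<in>Ct k. (sm t)^2)"
        by (rule sum.mono_neutral_right) (use Tk_fin CtTk in \<open>auto simp: Ct_def\<close>)
      thus ?thesis unfolding L2k_def L2_set_def by simp
    qed
    also have "\<dots> \<le> L2_set (\<lambda>t. c) (Ct k)"
    proof (rule L2_set_mono)
      fix t assume t: "t \<in> Ct k"
      have tT: "t \<in> Tall n" using t CtTk Tk_sub[OF k0] by auto
      have "length t = k" using t CtTk Tk_len by auto
      thus "\<bar>sm t\<bar> \<le> c" using bound2[OF tT] unfolding c_def X_def by simp
      show "0 \<le> \<bar>sm t\<bar>" by simp
    qed
    also have "\<dots> = sqrt (real (card (Ct k))) * c" using c0 by (simp add: L2_set_constant)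
    also have "\<dots> \<le> sqrt (16 * real b / sep k) * c"
      using cardCt[OF k] c0 by (intro mult_right_mono) auto
    also have "16 * real b / sep k = 16 * (real b * C2) / X" unfolding sep_def X_def using C2pos by (simp add: field_simps)
    also have "sqrt (16 * (real b * C2) / X) = 4 * sqrt (real b * C2) / sqrt X"
      by (simp add: real_sqrt_divide real_sqrt_mult s16)
    also have "4 * sqrt (real b * C2) / sqrt X * c = 2 * C4 * sqrt (real b * C2) * sqrt X / NN^2"
    proof -
      have sX: "X = sqrt X * sqrt X" using X0 by simp
      have sX0: "sqrt X > 0" using X0 by simp
      show ?thesis unfolding c_def using sX0 NNpos by (subst (2) sX) (simp add: field_simps)
    qed
    finally show ?thesis unfolding X_def .
  qed
  have fine: "sum L2k Lf \<le> 10 * C4 * C2 * real b / NN^2"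
  proof -
    define K where "K = 2 * C4 * sqrt (real b * C2) / NN^2"
    have K0: "K \<ge> 0" unfolding K_def using C4pos C2pos NNpos by simp
    have "sum L2k Lf \<le> (\<Sum>k\<in>Lf. K * sqrt (2 ^ (n - k)))"
      by (rule sum_mono) (use fineterm in \<open>simp add: K_def\<close>)
    also have "\<dots> = K * (\<Sum>k\<in>Lf. sqrt (2 ^ (n - k)))" by (simp add: sum_distrib_left)
    also have "\<dots> \<le> K * ((2 + sqrt 2) * sqrt (C2 * d))"
    proof (rule mult_left_mono[OF _ K0], rule geom_sum_bound)
      show "finite Lf" unfolding Lf_def by simp
      show "0 \<le> C2 * d" using C2pos d0 by simp
      fix k assume k: "k \<in> Lf"
      hence "k \<le> n" unfolding Lf_def by auto
      moreover have "(1 / C2) * 2 ^ (n - k) \<le> d" using k unfolding Lf_def sep_def by auto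
      hence "2 ^ (n - k) \<le> C2 * d" using C2pos by (simp add: field_simps)
      ultimately show "k \<le> n \<and> 2 ^ (n - k) \<le> C2 * d" by simp
    qed
    also have "K * ((2 + sqrt 2) * sqrt (C2 * d)) = 2 * C4 * C2 * (2 + sqrt 2) * sqrt (real b * d) / NN^2"
    proof -
      have "sqrt (real b * C2) * sqrt (C2 * d) = C2 * sqrt (real b * d)"
        using C2pos by (simp add: real_sqrt_mult[symmetric] mult_ac) (simp add: real_sqrt_mult)
      thus ?thesis unfolding K_def by (simp add: field_simps)
    qed
    also have "\<dots> \<le> 2 * C4 * C2 * (2 + sqrt 2) * (sqrt 2 * real b) / NN^2"
    proof -
      have "real b * d \<le> 2 * (real b)^2" using db d0 by (simp add: power2_eq_square)
      hence "sqrt (real b * d) \<le> sqrt (2 * (real b)^2)" by simp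
      also have "sqrt (2 * (real b)^2) = sqrt 2 * real b" by (simp add: real_sqrt_mult)
      finally have "sqrt (real b * d) \<le> sqrt 2 * real b" .
      moreover have "0 \<le> 2 * C4 * C2 * (2 + sqrt 2)" using C4pos C2pos by simp
      ultimately show ?thesis using NNpos by (intro divide_right_mono mult_left_mono) auto
    qed
    also have "\<dots> \<le> 10 * C4 * C2 * real b / NN^2"
    proof -
      have s2: "sqrt 2 * sqrt 2 = (2::real)" by simp
      have "sqrt (2::real) \<le> sqrt ((3/2)^2)" by (rule real_sqrt_le_mono) (simp add: power2_eq_square)
      hence "sqrt (2::real) \<le> 3/2" by simp
      hence "2 * (2 + sqrt 2) * sqrt 2 \<le> (10::real)" using s2 by (simp add: algebra_simps)
      hence "2 * C4 * C2 * (2 + sqrt 2) * (sqrt 2 * real b) \<le> 10 * C4 * C2 * real b"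
        using C4pos C2pos mult_right_mono[of "2 * (2 + sqrt 2) * sqrt 2" 10 "C4 * C2 * real b"]
        by (simp add: mult_ac)
      thus ?thesis using NNpos by (intro divide_right_mono) auto
    qed
    finally show ?thesis .
  qed
  have "C4 * ((d + 1) / NN^2) \<le> C4 * (2 * real b / NN^2)"
    using db C4pos NNpos by (intro mult_left_mono divide_right_mono) auto
  hence "PhiS A \<le> C4 * (2 * real b / NN^2) + 10 * C4 * C2 * real b / NN^2"
    using split coarse fine by linarith
  also have "\<dots> = C4 * (2 + 10 * C2) / NN^2 * real b" using NNpos by (simp add: field_simps)
  finally show ?thesis unfolding NN_def b_def .
qed

end

context gsetup
begin

lemma PhiS_nonneg: "PhiS A \<ge> 0"
  unfolding PhiS_def by (intro sum_nonneg) simp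

lemma PhiS_zero: "(\<And>t. t \<in> Tall n \<Longrightarrow> smeasure (\<mu> t) A = 0) \<Longrightarrow> PhiS A = 0"
  unfolding PhiS_def by (intro sum.neutral ballI L2_set_0') (use Tk_sub in blast)

lemma PhiS_union:
  assumes "A1 \<inter> A2 = {}" "A1 \<subseteq> grid_V n" "A2 \<subseteq> grid_V n"
  shows "PhiS (A1 \<union> A2) \<le> PhiS A1 + PhiS A2"
proof -
  have fin: "finite A1" "finite A2" using assms finite_V finite_subset by blast+
  have sm: "smeasure m (A1 \<union> A2) = smeasure m A1 + smeasure m A2" for m
    unfolding smeasure_def using fin assms(1) by (simp add: sum.union_disjoint)
  have "PhiS (A1 \<union> A2) = (\<Sum>k\<in>{0..n-2}. L2_set (\<lambda>t. smeasure (\<mu> t) A1 + smeasure (\<mu> t) A2) (Tk k))"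
    unfolding PhiS_def sm ..
  also have "\<dots> \<le> (\<Sum>k\<in>{0..n-2}. L2_set (\<lambda>t. smeasure (\<mu> t) A1) (Tk k) + L2_set (\<lambda>t. smeasure (\<mu> t) A2) (Tk k))"
    by (intro sum_mono L2_set_triangle_ineq)
  also have "\<dots> = PhiS A1 + PhiS A2" unfolding PhiS_def by (simp add: sum.distrib)
  finally show ?thesis .
qed

lemma PhiS_compl:
  assumes "A \<subseteq> grid_V n"
  shows "PhiS A = PhiS (grid_V n - A)"
proof -
  have "L2_set (\<lambda>t. smeasure (\<mu> t) A) (Tk k) = L2_set (\<lambda>t. smeasure (\<mu> t) (grid_V n - A)) (Tk k)"
    if "k \<in> {0..n-2}" for k
  proof -
    have "(\<Sum>t\<in>Tk k. (smeasure (\<mu> t) A)^2) = (\<Sum>t\<in>Tk k. (smeasure (\<mu> t) (grid_V n - A))^2)"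
      by (rule sum.cong) (use sm_compl[OF _ assms] Tk_sub[OF that] in auto)
    thus ?thesis unfolding L2_set_def by simp
  qed
  thus ?thesis unfolding PhiS_def by (intro sum.cong) auto
qed

definition KK :: real where "KK = C4 * (2 + 10 * C2) / (2^n)^2"

lemma KK_nonneg: "KK \<ge> 0"
  unfolding KK_def using C2 C4 by simp

lemma set_bound:
  assumes "A \<subseteq> grid_V n"
  shows "PhiS A \<le> KK * real (card (bd n A))"
proof -
  have "\<forall>A. A \<subseteq> grid_V n \<longrightarrow> card (bd n A) = m \<longrightarrow> PhiS A \<le> KK * real m" for m
  proof (induction m rule: less_induct)
    case (less m)
    show ?case
    proof (intro allI impI)
      fix A assume AV: "A \<subseteq> grid_V n" and cm: "card (bd n A) = m"
      have bdpos: "card (bd n X) > 0" if h: "X \<noteq> {}" "X \<subseteq> grid_V n" "y \<in> grid_V n" "y \<notin> X" for X y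
      proof -
        obtain x where "x \<in> X" using h(1) by blast
        hence "bd n X \<noteq> {}" using bd_nonempty[of x X y n] h by blast
        thus ?thesis using finite_bd[of n X] by (simp add: card_gt_0_iff)
      qed
      show "PhiS A \<le> KK * real m"
      proof (cases "A = {} \<or> A = grid_V n")
        case True
        have "PhiS A = 0"
        proof (rule PhiS_zero)
          fix t assume "t \<in> Tall n"
          thus "smeasure (\<mu> t) A = 0" using True mass0 unfolding smeasure_def by auto
        qed
        thus ?thesis using KK_nonneg by simp
      next
        case False
        hence Ane: "A \<noteq> {}" and VAne: "grid_V n - A \<noteq> {}" using AV by auto
        show ?thesis
        proof (cases "induces_connected A")
          case False
          from split_disconnected[OF False] obtain A1 A2 where sp: "A1 \<noteq> {}" "A2 \<noteq> {}" "A1 \<inter> A2 = {}"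
            "A = A1 \<union> A2" "\<forall>x\<in>A1. \<forall>y\<in>A2. l1dist x y \<noteq> 1" by blast
          have AiV: "A1 \<subseteq> grid_V n" "A2 \<subseteq> grid_V n" using sp(4) AV by auto
          note bs = bd_split[OF sp(4) sp(3) sp(5), of n]
          have cs: "card (bd n A) = card (bd n A1) + card (bd n A2)"
            using bs finite_bd by (simp add: card_Un_disjoint)
          obtain y2 where "y2 \<in> A2" using sp(2) by blast
          hence c1: "card (bd n A1) > 0" using bdpos[OF sp(1) AiV(1), of y2] sp(3) AiV(2) by blast
          obtain y1 where "y1 \<in> A1" using sp(1) by blast
          hence c2: "card (bd n A2) > 0" using bdpos[OF sp(2) AiV(2), of y1] sp(3) AiV(1) by blast
          have "PhiS A1 \<le> KK * real (card (bd n A1))" using less.IH[of "card (bd n A1)"] cs cm c2 AiV by auto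
          moreover have "PhiS A2 \<le> KK * real (card (bd n A2))" using less.IH[of "card (bd n A2)"] cs cm c1 AiV by auto
          moreover have "PhiS A \<le> PhiS A1 + PhiS A2" using PhiS_union[OF sp(3) AiV] sp(4) by simp
          ultimately show ?thesis using cs cm by (simp add: algebra_simps)
        next
          case connA: True
          show ?thesis
          proof (cases "induces_connected (grid_V n - A)")
            case False
            from split_disconnected[OF False] obtain B1 B2 where sp: "B1 \<noteq> {}" "B2 \<noteq> {}" "B1 \<inter> B2 = {}"
              "grid_V n - A = B1 \<union> B2" "\<forall>x\<in>B1. \<forall>y\<in>B2. l1dist x y \<noteq> 1" by blast
            have BiV: "B1 \<subseteq> grid_V n" "B2 \<subseteq> grid_V n" using sp(4) by auto
            note bs = bd_split[OF sp(4) sp(3) sp(5), of n, unfolded bd_compl]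
            have cs: "card (bd n A) = card (bd n B1) + card (bd n B2)"
              using bs finite_bd by (simp add: card_Un_disjoint)
            obtain a where a: "a \<in> A" using Ane by blast
            have aB: "a \<in> grid_V n" "a \<notin> B1" "a \<notin> B2" using a AV sp(4) by auto
            have c1: "card (bd n B1) > 0" using bdpos[OF sp(1) BiV(1) aB(1,2)] .
            have c2: "card (bd n B2) > 0" using bdpos[OF sp(2) BiV(2) aB(1,3)] .
            have "PhiS B1 \<le> KK * real (card (bd n B1))" using less.IH[of "card (bd n B1)"] cs cm c2 BiV by auto
            moreover have "PhiS B2 \<le> KK * real (card (bd n B2))" using less.IH[of "card (bd n B2)"] cs cm c1 BiV by auto
            moreover have "PhiS A \<le> PhiS B1 + PhiS B2" using PhiS_union[OF sp(3) BiV] sp(4) PhiS_compl[OF AV] by simp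
            ultimately show ?thesis using cs cm by (simp add: algebra_simps)
          next
            case True
            from core[OF AV Ane VAne connA True] show ?thesis unfolding KK_def cm .
          qed
        qed
      qed
    qed
  qed
  thus ?thesis using assms by blast
qed

end

context gsetup
begin

definition PhiF :: "(vtx \<Rightarrow> real) \<Rightarrow> real" where
  "PhiF f = (\<Sum>k\<in>{0..n-2}. L2_set (\<lambda>t. integral_m n f (\<mu> t)) (Tk k))"

definition SE :: "(vtx \<Rightarrow> real) \<Rightarrow> real" where
  "SE f = (\<Sum>e\<in>grid_E n. \<bar>f (fst e) - f (snd e)\<bar>)"

lemma SE_nonneg: "SE f \<ge> 0" unfolding SE_def by (intro sum_nonneg) simp

lemma V_ne: "grid_V n \<noteq> {}"
proof -
  have "(0,0) \<in> grid_V n" unfolding grid_V_iff by simp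
  thus ?thesis by blast
qed

lemma fun_bound: "PhiF f \<le> KK * SE f"
proof -
  have "\<forall>f. card (f ` grid_V n) = m \<longrightarrow> PhiF f \<le> KK * SE f" for m
  proof (induction m rule: less_induct)
    case (less m)
    show ?case
    proof (intro allI impI)
      fix f :: "vtx \<Rightarrow> real" assume cm: "card (f ` grid_V n) = m"
      have finF: "finite (f ` grid_V n)" using finite_V by simp
      show "PhiF f \<le> KK * SE f"
      proof (cases "card (f ` grid_V n) \<le> 1")
        case True
        obtain v0 where v0: "v0 \<in> grid_V n" using V_ne by blast
        have const: "f v = f v0" if "v \<in> grid_V n" for v
        proof -
          have "card (f ` grid_V n) \<le> Suc 0" using True by simp
          hence "\<forall>a1\<in>f ` grid_V n. \<forall>a2\<in>f ` grid_V n. a1 = a2" using card_le_Suc0_iff_eq[OF finF] by blast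
          thus ?thesis using that v0 by blast
        qed
        have "PhiF f = 0" unfolding PhiF_def
        proof (intro sum.neutral ballI L2_set_0')
          fix k t assume k: "k \<in> {0..n-2}" and t: "t \<in> Tk k"
          have tT: "t \<in> Tall n" using Tk_sub[OF k] t by blast
          have "integral_m n f (\<mu> t) = (\<Sum>v\<in>grid_V n. f v0 * \<mu> t v)"
            unfolding integral_m_def by (rule sum.cong) (auto simp: const)
          also have "\<dots> = f v0 * smeasure (\<mu> t) (grid_V n)" unfolding smeasure_def by (simp add: sum_distrib_left)
          also have "\<dots> = 0" using mass0 tT by simp
          finally show "integral_m n f (\<mu> t) = 0" .
        qed
        thus ?thesis using KK_nonneg SE_nonneg by simp
      next
        case False
        define M where "M = Max (f ` grid_V n)"
        define W where "W = f ` grid_V n - {M}"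
        have MF: "M \<in> f ` grid_V n" unfolding M_def using finF V_ne by simp
        have Wne: "W \<noteq> {}"
        proof
          assume "W = {}"
          hence "f ` grid_V n \<subseteq> {M}" unfolding W_def by auto
          hence "card (f ` grid_V n) \<le> card {M}" by (rule card_mono[rotated]) simp
          hence "card (f ` grid_V n) \<le> 1" by simp
          thus False using False by simp
        qed
        have finW: "finite W" unfolding W_def using finF by simp
        define M' where "M' = Max W"
        have M'W: "M' \<in> W" unfolding M'_def using finW Wne by simp
        have leM: "f v \<le> M" if "v \<in> grid_V n" for v unfolding M_def using finF that by simp
        have leM': "f v \<le> M'" if "v \<in> grid_V n" "f v \<noteq> M" for v
        proof -
          have "f v \<in> W" unfolding W_def using that by auto
          thus ?thesis unfolding M'_def using finW by simp
        qed
        have "M' \<in> f ` grid_V n" "M' \<noteq> M" using M'W unfolding W_def by auto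
        moreover have "M' \<le> M" unfolding M_def by (rule Max_ge[OF finF]) (use M'W W_def in auto)
        ultimately have MM': "M' < M" by simp
        define A where "A = {v \<in> grid_V n. f v = M}"
        have AV: "A \<subseteq> grid_V n" unfolding A_def by auto
        define g where "g v = (if f v = M then M' else f v)" for v
        have gW: "g ` grid_V n = W"
        proof
          show "g ` grid_V n \<subseteq> W" unfolding g_def using M'W W_def by auto
          show "W \<subseteq> g ` grid_V n"
          proof
            fix w assume "w \<in> W"
            then obtain v where "v \<in> grid_V n" "w = f v" "f v \<noteq> M" unfolding W_def by auto
            thus "w \<in> g ` grid_V n" unfolding g_def by force
          qed
        qed
        have "card W = card (f ` grid_V n) - 1" unfolding W_def by (rule card_Diff_singleton[OF MF])
        hence cg: "card (g ` grid_V n) < m" unfolding gW using cm False by simp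
        have IHg: "PhiF g \<le> KK * SE g" using less.IH[OF cg] by blast
        have intf: "integral_m n f (\<mu> t) = integral_m n g (\<mu> t) + (M - M') * smeasure (\<mu> t) A" for t
        proof -
          have "integral_m n f (\<mu> t) = (\<Sum>v\<in>grid_V n. g v * \<mu> t v + (if f v = M then (M - M') * \<mu> t v else 0))"
            unfolding integral_m_def by (rule sum.cong) (auto simp: g_def algebra_simps)
          also have "\<dots> = integral_m n g (\<mu> t) + (\<Sum>v\<in>grid_V n. if f v = M then (M - M') * \<mu> t v else 0)"
            unfolding integral_m_def by (simp add: sum.distrib)
          also have "(\<Sum>v\<in>grid_V n. if f v = M then (M - M') * \<mu> t v else 0) = (\<Sum>v\<in>A. (M - M') * \<mu> t v)"
            unfolding A_def using finite_V by (simp add: sum.inter_filter)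
          also have "\<dots> = (M - M') * smeasure (\<mu> t) A" unfolding smeasure_def by (simp add: sum_distrib_left)
          finally show ?thesis .
        qed
        have PhiFf: "PhiF f \<le> PhiF g + (M - M') * PhiS A"
        proof -
          have "PhiF f = (\<Sum>k\<in>{0..n-2}. L2_set (\<lambda>t. integral_m n g (\<mu> t) + (M - M') * smeasure (\<mu> t) A) (Tk k))"
            unfolding PhiF_def intf ..
          also have "\<dots> \<le> (\<Sum>k\<in>{0..n-2}. L2_set (\<lambda>t. integral_m n g (\<mu> t)) (Tk k) + L2_set (\<lambda>t. (M - M') * smeasure (\<mu> t) A) (Tk k))"
            by (intro sum_mono L2_set_triangle_ineq)
          also have "\<dots> = (\<Sum>k\<in>{0..n-2}. L2_set (\<lambda>t. integral_m n g (\<mu> t)) (Tk k) + (M - M') * L2_set (\<lambda>t. smeasure (\<mu> t) A) (Tk k))"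
            using MM' by (simp add: L2_set_right_distrib)
          also have "\<dots> = PhiF g + (M - M') * PhiS A" unfolding PhiF_def PhiS_def by (simp add: sum.distrib sum_distrib_left)
          finally show ?thesis .
        qed
        have SEf: "SE f = SE g + (M - M') * real (card (bd n A))"
        proof -
          have edge: "\<bar>f (fst e) - f (snd e)\<bar> = \<bar>g (fst e) - g (snd e)\<bar> + (M - M') * (if e \<in> bd n A then 1 else 0)"
            if e: "e \<in> grid_E n" for e
          proof -
            have "e \<in> grid_V n \<times> grid_V n" using e E_sub by blast
            hence uv: "fst e \<in> grid_V n" "snd e \<in> grid_V n" by (auto simp: mem_Times_iff)
            have bdiff: "(e \<in> bd n A) = ((f (fst e) = M) \<noteq> (f (snd e) = M))"
              using e uv unfolding bd_def A_def by auto
            show ?thesis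
            proof (cases "f (fst e) = M")
              case T1: True
              show ?thesis
              proof (cases "f (snd e) = M")
                case True thus ?thesis using T1 bdiff unfolding g_def by simp
              next
                case False
                have l: "f (snd e) \<le> M'" using leM'[OF uv(2) False] .
                have "\<bar>f (fst e) - f (snd e)\<bar> = M - f (snd e)" using T1 l MM' by simp
                moreover have "\<bar>g (fst e) - g (snd e)\<bar> = M' - f (snd e)" using T1 False l unfolding g_def by simp
                ultimately show ?thesis using T1 False bdiff by simp
              qed
            next
              case F1: False
              have l: "f (fst e) \<le> M'" using leM'[OF uv(1) F1] .
              show ?thesis
              proof (cases "f (snd e) = M")
                case True
                have "\<bar>f (fst e) - f (snd e)\<bar> = M - f (fst e)" using True l MM' by simp
                moreover have "\<bar>g (fst e) - g (snd e)\<bar> = M' - f (fst e)" using True F1 l unfolding g_def by simp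
                ultimately show ?thesis using True F1 bdiff by simp
              next
                case False thus ?thesis using F1 bdiff unfolding g_def by simp
              qed
            qed
          qed
          have "SE f = (\<Sum>e\<in>grid_E n. \<bar>g (fst e) - g (snd e)\<bar> + (M - M') * (if e \<in> bd n A then 1 else 0))"
            unfolding SE_def by (rule sum.cong) (use edge in auto)
          also have "\<dots> = SE g + (M - M') * (\<Sum>e\<in>grid_E n. if e \<in> bd n A then 1 else 0)"
            unfolding SE_def by (simp add: sum.distrib sum_distrib_left)
          also have "(\<Sum>e\<in>grid_E n. if e \<in> bd n A then 1 else (0::real)) = real (card (bd n A))"
          proof -
            have "bd n A = {e \<in> grid_E n. e \<in> bd n A}" unfolding bd_def by auto
            hence "real (card (bd n A)) = (\<Sum>e\<in>{e \<in> grid_E n. e \<in> bd n A}. 1)" by simp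
            also have "\<dots> = (\<Sum>e\<in>grid_E n. if e \<in> bd n A then 1 else (0::real))"
              by (rule sum.inter_filter[OF finite_E])
            finally show ?thesis by simp
          qed
          finally show ?thesis .
        qed
        have "(M - M') * PhiS A \<le> (M - M') * (KK * real (card (bd n A)))"
          by (rule mult_left_mono[OF set_bound[OF AV]]) (use MM' in simp)
        hence "PhiF f \<le> KK * SE g + (M - M') * (KK * real (card (bd n A)))"
          using PhiFf IHg by linarith
        also have "\<dots> = KK * SE f" unfolding SEf by (simp add: algebra_simps)
        finally show ?thesis .
      qed
    qed
  qed
  thus ?thesis by blast
qed

end

lemma card_V: "card (grid_V n) = (2^n + 1)^2"
proof -
  have "card (grid_V n) = card {0..(2::int)^n} * card {0..(2::int)^n}" unfolding grid_V_def by (simp add: card_cartesian_product)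
  also have "card {0..(2::int)^n} = 2^n + 1" by (simp add: nat_add_distrib nat_power_eq)
  finally show ?thesis by (simp add: power2_eq_square)
qed

lemma card_E_le: "card (grid_E n) \<le> 2 * (2^n + 1)^2"
proof -
  have "grid_E n \<subseteq> (\<lambda>(u, i). (u, if i then (fst u + 1, snd u) else (fst u, snd u + 1))) ` (grid_V n \<times> (UNIV :: bool set))"
  proof
    fix e assume e: "e \<in> grid_E n"
    then obtain u v where uv: "e = (u, v)" "u \<in> grid_V n" "v = (fst u + 1, snd u) \<or> v = (fst u, snd u + 1)"
      unfolding grid_E_def by auto
    show "e \<in> (\<lambda>(u, i). (u, if i then (fst u + 1, snd u) else (fst u, snd u + 1))) ` (grid_V n \<times> (UNIV :: bool set))"
    proof (cases "v = (fst u + 1, snd u)")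
      case True thus ?thesis using uv by (intro image_eqI[of _ _ "(u, True)"]) auto
    next
      case False thus ?thesis using uv by (intro image_eqI[of _ _ "(u, False)"]) auto
    qed
  qed
  hence "card (grid_E n) \<le> card ((\<lambda>(u, i). (u, if i then (fst u + 1, snd u) else (fst u, snd u + 1))) ` (grid_V n \<times> (UNIV :: bool set)))"
    using finite_V by (intro card_mono) auto
  also have "\<dots> \<le> card (grid_V n \<times> (UNIV :: bool set))" using finite_V by (intro card_image_le) auto
  also have "\<dots> = 2 * (2^n + 1)^2" using card_V by (simp add: card_cartesian_product)
  finally show ?thesis .
qed

lemma card_E_pos: "card (grid_E n) > 0"
proof -
  have "((0,0),(1,0)) \<in> grid_E n" unfolding grid_E_def grid_V_def by auto
  thus ?thesis using finite_E card_gt_0_iff by blast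
qed

theorem theorem3p7:
  fixes n :: nat and C2 C4 :: real and \<mu> :: "nat list \<Rightarrow> vtx \<Rightarrow> real"
  assumes n2: "n \<ge> 2"
    and C2: "C2 \<ge> 1/2" and C4: "C4 \<ge> 1/2"
    and mass0: "\<forall>t\<in>Tall n. smeasure (\<mu> t) (grid_V n) = 0"
    and P2: "\<forall>t\<in>Tall n. \<forall>t'\<in>Tall n - {t}.
               l1setdist (supp n (\<mu> t)) (supp n (\<mu> t'))
                 \<ge> ereal ((1 / C2) * 2 powr (real n - real (max (length t) (length t'))))"
    and P4: "\<forall>t\<in>Tall n. \<forall>A. A \<subseteq> grid_V n \<longrightarrow>
               \<bar>smeasure (\<mu> t) A\<bar> \<le> C4 * min (2 powr (- real n - 1 - real (length t)))
                                               (4 powr (- real n) * (l1diam A + 1))"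
    and P5: "\<forall>t\<in>Tall n. \<exists>u\<in>grid_V n. induces_connected (supp n (\<mu> t) \<union> {u})"
  shows "\<exists>C. C \<le> C4 * (20 + 40 * C2) \<and>
    (\<forall>f :: vtx \<Rightarrow> real.
      (\<Sum>k\<in>{0..n-2}. sqrt (\<Sum>t\<in>Tk k. \<bar>integral_m n f (\<mu> t)\<bar>^2))
        \<le> C * (\<Sum>(u,v)\<in>grid_E n. \<bar>f u - f v\<bar> * (1 / real (card (grid_E n)))))"
proof -
  have gs: "gsetup n C2 C4 \<mu>" unfolding gsetup_def using n2 C2 C4 mass0 P2 P4 P5 by blast
  interpret G: gsetup n C2 C4 \<mu> by (rule gs)
  define C where "C = C4 * (20 + 40 * C2)"
  define cE where "cE = real (card (grid_E n))"
  define NN :: real where "NN = 2^n"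
  have cE0: "cE > 0" unfolding cE_def using card_E_pos by simp
  have NN4: "NN \<ge> 4"
  proof -
    have "(2::real)^2 \<le> 2^n" using n2 by (intro power_increasing) auto
    thus ?thesis unfolding NN_def by simp
  qed
  have cEle: "cE \<le> 2 * (NN + 1)^2"
  proof -
    have "card (grid_E n) \<le> 2 * (2^n + 1)^2" by (rule card_E_le)
    hence "real (card (grid_E n)) \<le> real (2 * (2^n + 1)^2)" by (simp only: of_nat_le_iff)
    thus ?thesis unfolding cE_def NN_def by (simp add: add.commute)
  qed
  have "(NN + 1)^2 \<le> (25/16) * NN^2"
  proof -
    have "NN + 1 \<le> (5/4) * NN" using NN4 by simp
    hence "(NN + 1)^2 \<le> ((5/4) * NN)^2" using NN4 by (intro power_mono) auto
    moreover have "((5/4) * NN)^2 = (25/16) * NN^2" by (simp add: power2_eq_square)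
    ultimately show ?thesis by linarith
  qed
  hence cEle2: "cE \<le> (25/8) * NN^2" using cEle by simp
  have KK: "G.KK \<le> C / cE"
  proof -
    have "G.KK * cE \<le> G.KK * ((25/8) * NN^2)" using cEle2 G.KK_nonneg by (intro mult_left_mono) auto
    also have "G.KK * ((25/8) * NN^2) = C4 * (2 + 10 * C2) * (25/8)"
      unfolding G.KK_def NN_def by (simp add: field_simps)
    also have "\<dots> \<le> C" unfolding C_def using C2 C4 by (simp add: field_simps)
    finally show ?thesis using cE0 by (simp add: pos_le_divide_eq)
  qed
  show ?thesis
  proof (intro exI[of _ C] conjI allI)
    show "C \<le> C4 * (20 + 40 * C2)" unfolding C_def by simp
    fix f :: "vtx \<Rightarrow> real"
    have lhs: "(\<Sum>k\<in>{0..n-2}. sqrt (\<Sum>t\<in>Tk k. \<bar>integral_m n f (\<mu> t)\<bar>^2)) = G.PhiF f"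
      unfolding G.PhiF_def L2_set_def by simp
    have rhs: "C * (\<Sum>(u,v)\<in>grid_E n. \<bar>f u - f v\<bar> * (1 / real (card (grid_E n)))) = (C / cE) * G.SE f"
      unfolding G.SE_def cE_def by (simp add: case_prod_beta sum_distrib_left sum_distrib_right field_simps)
    have "G.PhiF f \<le> G.KK * G.SE f" by (rule G.fun_bound)
    also have "\<dots> \<le> (C / cE) * G.SE f" using KK G.SE_nonneg by (intro mult_right_mono) auto
    finally show "(\<Sum>k\<in>{0..n-2}. sqrt (\<Sum>t\<in>Tk k. \<bar>integral_m n f (\<mu> t)\<bar>^2))
        \<le> C * (\<Sum>(u,v)\<in>grid_E n. \<bar>f u - f v\<bar> * (1 / real (card (grid_E n))))"
      unfolding lhs rhs .
  qed
qed

end
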